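(* Let $1\le p<\infty$, $q=p(p-1)^{-1}$, $\beta\ge 0$, $r\in\mathbb{N}$, let $f\in L^{p}$, let $x\in\mathbb{R}$, and let $\omega$ be a function of the modulus of continuity type. Put $M_r=\{0,1,\dots,[r/2]\}$ if $r$ is odd and $M_r=\{0,1,\dots,[r/2]-1\}$ if $r$ is even. Assume there are $\gamma$ with $0<\gamma<\beta+\frac1p$ and a constant $C$ (possibly depending on $x$, but not on $n$) such that for all integers $n\ge 0$: (i) $\left\{\int_{0}^{\frac{\pi}{r(n+1)}}\left(\frac{\omega(t)}{t\sin^{\beta}\frac{rt}{2}}\right)^{q}dt\right\}^{1/q}\le C(n+1)^{\beta+1/p}\,\omega\!\left(\frac{\pi}{n+1}\right)$; (ii) for every $m\in M_r$: $\left\{\int_{\frac{2m\pi}{r}}^{\frac{2m\pi}{r}+\frac{\pi}{r(n+1)}}\left(\frac{|\varphi_x(t)|}{\omega(t)}\right)^{p}\left|\sin\frac{rt}{2}\right|^{\beta p}dt\right\}^{1/p}\le C(n+1)^{-1/p}$; (iii) for every $m\in M_r$: $\left\{\int_{\frac{2m\pi}{r}+\frac{\pi}{r(n+1)}}^{\frac{2m\pi}{r}+\frac{\pi}{r}}\left(\frac{|\varphi_x(t)|\,|\sin\frac{rt}{2}|^{\beta}}{\omega(t)\,(t-\frac{2m\pi}{r})^{\gamma}}\right)^{p}dt\right\}^{1/p}\le C(n+1)^{\gamma}$; (iv) if $r\ge 2$, then for every $m\in\{0,1,\dots,[r/2]-1\}$: $\left\{\int_{\frac{2(m+1)\pi}{r}-\frac{\pi}{r(n+1)}}^{\frac{2(m+1)\pi}{r}}\left(\frac{|\varphi_x(t)|}{\omega(t)}\right)^{p}\left|\sin\frac{rt}{2}\right|^{\beta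 p}dt\right\}^{1/p}\le C(n+1)^{-1/p}$ and $\left\{\int_{\frac{2(m+1)\pi}{r}-\frac{\pi}{r}}^{\frac{2(m+1)\pi}{r}-\frac{\pi}{r(n+1)}}\left(\frac{|\varphi_x(t)|\,|\sin\frac{rt}{2}|^{\beta}}{\omega(t)\,(\frac{2(m+1)\pi}{r}-t)^{\gamma}}\right)^{p}dt\right\}^{1/p}\le C(n+1)^{\gamma}$; (v) the matrix $A$ satisfies $\left[\sum_{l=0}^{n}\sum_{k=l}^{r+l-1}a_{n,k}\right]^{-1}\le C$. Then there is a constant $C'$ (possibly depending on $x$) such that for all $n\ge 0$, $$\left|T_{n,A}f(x)-f(x)\right|\le C'(n+1)^{\beta+\frac1p+1}A_{n,r}\,\omega\!\left(\frac{\pi}{n+1}\right).$$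
   Context: $L^{p}$ ($1\le p<\infty$) is the space of $2\pi$-periodic real functions that are Lebesgue integrable with $p$-th power over $[-\pi,\pi]$. For $f\in L^1$, $S_kf(x)=\frac{a_0(f)}2+\sum_{\nu=1}^{k}(a_\nu(f)\cos\nu x+b_\nu(f)\sin\nu x)$ is the $k$-th partial sum of the trigonometric Fourier series of $f$. $A=(a_{n,k})_{n,k\ge0}$ is an infinite real matrix with $a_{n,k}\ge0$, $\lim_{n\to\infty}a_{n,k}=0$ for each $k$, and $\sum_{k=0}^\infty a_{n,k}=1$ for each $n$; $T_{n,A}f(x)=\sum_{k=0}^{\infty}a_{n,k}S_kf(x)$, and $A_{n,r}=\sum_{k=0}^{\infty}|a_{n,k}-a_{n,k+r}|$. Also $\varphi_x(t)=f(x+t)+f(x-t)-2f(x)$. A function of the modulus of continuity type is a nondecreasing continuous function $\omega$ on $[0,2\pi]$ with $\omega(0)=0$ and $\omega(\delta_1+\delta_2)\le\omega(\delta_1)+\omega(\delta_2)$ whenever $0\le\delta_1\le\delta_2\le\delta_1+\delta_2\le2\pi$. $[y]$ denotes the integer part of $y$. When $p=1$ (so $q=\infty$), $\{\int g^q\}^{1/q}$ is read as the essential supremum of $g$. *)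

theory Defs
  imports "HOL-Analysis.Analysis"
begin

definition in_Lp :: "real \<Rightarrow> (real \<Rightarrow> real) \<Rightarrow> bool" where
  "in_Lp p f \<longleftrightarrow> f \<in> borel_measurable lborel \<and> (\<forall>t. f (t + 2 * pi) = f t)
     \<and> set_integrable lborel {-pi..pi} (\<lambda>t. \<bar>f t\<bar> powr p)"

definition fourier_a :: "(real \<Rightarrow> real) \<Rightarrow> nat \<Rightarrow> real" where
  "fourier_a f \<nu> = (LBINT t:{-pi..pi}. f t * cos (real \<nu> * t)) / pi"

definition fourier_b :: "(real \<Rightarrow> real) \<Rightarrow> nat \<Rightarrow> real" where
  "fourier_b f \<nu> = (LBINT t:{-pi..pi}. f t * sin (real \<nu> * t)) / pi"

definition fourier_partial_sum :: "(real \<Rightarrow> real) \<Rightarrow> nat \<Rightarrow> real \<Rightarrow> real" where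
  "fourier_partial_sum f k x = fourier_a f 0 / 2
     + (\<Sum>\<nu>=1..k. fourier_a f \<nu> * cos (real \<nu> * x) + fourier_b f \<nu> * sin (real \<nu> * x))"

definition summation_matrix :: "(nat \<Rightarrow> nat \<Rightarrow> real) \<Rightarrow> bool" where
  "summation_matrix a \<longleftrightarrow> (\<forall>n k. a n k \<ge> 0) \<and> (\<forall>k. (\<lambda>n. a n k) \<longlonglongrightarrow> 0)
     \<and> (\<forall>n. (\<lambda>k. a n k) sums 1)"

definition T_mean :: "(nat \<Rightarrow> nat \<Rightarrow> real) \<Rightarrow> (real \<Rightarrow> real) \<Rightarrow> nat \<Rightarrow> real \<Rightarrow> real" where
  "T_mean a f n x = (\<Sum>k. a n k * fourier_partial_sum f k x)"

definition A_var :: "(nat \<Rightarrow> nat \<Rightarrow> real) \<Rightarrow> nat \<Rightarrow> nat \<Rightarrow> real" where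
  "A_var a n r = (\<Sum>k. \<bar>a n k - a n (k + r)\<bar>)"

definition phi :: "(real \<Rightarrow> real) \<Rightarrow> real \<Rightarrow> real \<Rightarrow> real" where
  "phi f x t = f (x + t) + f (x - t) - 2 * f x"

definition modulus_type :: "(real \<Rightarrow> real) \<Rightarrow> bool" where
  "modulus_type \<omega> \<longleftrightarrow> mono_on {0..2*pi} \<omega> \<and> continuous_on {0..2*pi} \<omega> \<and> \<omega> 0 = 0
     \<and> (\<forall>d1 d2. 0 \<le> d1 \<and> d1 \<le> d2 \<and> d1 + d2 \<le> 2*pi \<longrightarrow> \<omega> (d1 + d2) \<le> \<omega> d1 + \<omega> d2)"

text \<open>{ int_S |g|^s }^(1/s) <= X  (for X >= 0, 1 <= s < infinity), stated via the
  nonnegative Lebesgue integral so that an infinite integral violates the bound.\<close>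
definition Lnorm_le :: "real \<Rightarrow> real set \<Rightarrow> (real \<Rightarrow> real) \<Rightarrow> real \<Rightarrow> bool" where
  "Lnorm_le s S g X \<longleftrightarrow> 0 \<le> X \<and>
     set_nn_integral lborel S (\<lambda>t. ennreal (\<bar>g t\<bar> powr s)) \<le> ennreal (X powr s)"

definition esssup_le :: "real set \<Rightarrow> (real \<Rightarrow> real) \<Rightarrow> real \<Rightarrow> bool" where
  "esssup_le S g X \<longleftrightarrow> (AE t in lborel. t \<in> S \<longrightarrow> \<bar>g t\<bar> \<le> X)"

definition dual_norm_le :: "real \<Rightarrow> real set \<Rightarrow> (real \<Rightarrow> real) \<Rightarrow> real \<Rightarrow> bool" where
  "dual_norm_le p S g X \<longleftrightarrow>
     (if p = 1 then esssup_le S g X else Lnorm_le (p / (p - 1)) S g X)"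

definition M_set :: "nat \<Rightarrow> nat set" where
  "M_set r = (if odd r then {0 .. r div 2} else {0 ..< r div 2})"

end

theory Submission
  imports Defs
begin


lemma window_le:
  fixes a :: "nat \<Rightarrow> real" and r l :: nat
  assumes nn: "\<And>k. 0 \<le> a k" and sa: "summable a" and sd: "summable (\<lambda>k. \<bar>a k - a (k + r)\<bar>)"
    and r: "1 \<le> r"
  shows "(\<Sum>k=l..<l+r. a k) \<le> (\<Sum>k. \<bar>a k - a (k + r)\<bar>)"
proof -
  have tel: "(\<Sum>k=l..<l+r. a k) - (\<Sum>k=l..<l+r. a (k + N*r)) = (\<Sum>i=l..<l+N*r. a i - a (i + r))" for N
  proof (induction N)
    case 0 then show ?case by simp
  next
    case (Suc N)
    have "(\<Sum>i=l..<l+Suc N*r. a i - a (i + r)) = (\<Sum>i=l..<l+N*r. a i - a (i + r)) + (\<Sum>i=l+N*r..<l+N*r+r. a i - a (i + r))"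
      by (subst sum.atLeastLessThan_concat[symmetric]) (auto simp: algebra_simps)
    also have "(\<Sum>i=l+N*r..<l+N*r+r. a i - a (i + r)) = (\<Sum>k=l..<l+r. a (k + N*r) - a (k + N*r + r))"
      using sum.shift_bounds_nat_ivl[of "\<lambda>i. a i - a (i + r)" l "N*r" "l+r"]
      by (simp add: algebra_simps)
    finally show ?case using Suc by (simp add: sum_subtractf algebra_simps)
  qed
  have le: "(\<Sum>k=l..<l+r. a k) - (\<Sum>k=l..<l+r. a (k + N*r)) \<le> (\<Sum>k. \<bar>a k - a (k + r)\<bar>)" for N
  proof -
    have "(\<Sum>i=l..<l+N*r. a i - a (i + r)) \<le> (\<Sum>i=l..<l+N*r. \<bar>a i - a (i + r)\<bar>)"
      by (rule sum_mono) auto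
    also have "\<dots> \<le> (\<Sum>i<l+N*r. \<bar>a i - a (i + r)\<bar>)"
      by (rule sum_mono2) auto
    also have "\<dots> \<le> (\<Sum>k. \<bar>a k - a (k + r)\<bar>)"
      by (rule sum_le_suminf[OF sd]) auto
    finally show ?thesis using tel by simp
  qed
  have z: "(\<lambda>N. a (k + N*r)) \<longlonglongrightarrow> 0" for k
  proof -
    have "filterlim (\<lambda>N. k + N*r) at_top sequentially"
      using r by (intro filterlim_subseq) (auto simp: strict_mono_def)
    then show ?thesis using summable_LIMSEQ_zero[OF sa] by (rule filterlim_compose[rotated])
  qed
  have "(\<lambda>N. (\<Sum>k=l..<l+r. a k) - (\<Sum>k=l..<l+r. a (k + N*r))) \<longlonglongrightarrow> (\<Sum>k=l..<l+r. a k) - (\<Sum>k=l..<l+r. 0)"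
    by (intro tendsto_intros z)
  then show ?thesis using le
    by (simp add: LIMSEQ_le_const2)
qed

definition Dk :: "nat \<Rightarrow> real \<Rightarrow> real" where
  "Dk k t = 1/2 + (\<Sum>\<nu>=1..k. cos (real \<nu> * t))"

lemma Dk_sin: "2 * sin (t/2) * Dk k t = sin ((real k + 1/2) * t)"
proof (induction k)
  case 0 then show ?case by (simp add: Dk_def)
next
  case (Suc k)
  have "Dk (Suc k) t = Dk k t + cos (real (Suc k) * t)" by (simp add: Dk_def)
  moreover have "2 * sin (t/2) * cos (real (Suc k) * t) = sin ((real (Suc k) + 1/2) * t) - sin ((real k + 1/2) * t)"
  proof -
    have e1: "(real (Suc k) + 1/2) * t = t/2 + real (Suc k) * t" by (simp add: algebra_simps)
    have e2: "(real k + 1/2) * t = real (Suc k) * t - t/2" by (simp add: algebra_simps)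
    show ?thesis unfolding e1 e2 sin_add sin_diff by (simp add: algebra_simps)
  qed
  ultimately show ?case using Suc by (simp add: algebra_simps)
qed

lemma Dk_cos: "4 * sin (t/2) * sin (real r * t / 2) * Dk k t
   = cos ((real k + 1/2 - real r/2) * t) - cos ((real (k + r) + 1/2 - real r/2) * t)"
proof -
  have "4 * sin (t/2) * sin (real r * t / 2) * Dk k t = 2 * sin (real r * t / 2) * sin ((real k + 1/2) * t)"
    using Dk_sin[of t k] by (simp add: algebra_simps)
  also have "\<dots> = cos ((real k + 1/2) * t - real r * t / 2) - cos ((real k + 1/2) * t + real r * t / 2)"
    unfolding cos_add cos_diff by (simp add: algebra_simps)
  finally show ?thesis by (simp add: algebra_simps)
qed

lemma Dk_bound1:
  assumes "0 < t" "t < 2*pi"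
  shows "\<bar>Dk k t\<bar> \<le> 1 / (2 * sin (t/2))"
proof -
  have s: "0 < sin (t/2)" using assms by (intro sin_gt_zero) auto
  have "\<bar>2 * sin (t/2) * Dk k t\<bar> \<le> 1" unfolding Dk_sin by simp
  then have "2 * sin (t/2) * \<bar>Dk k t\<bar> \<le> 1" using s by (simp add: abs_mult)
  then show ?thesis using s by (simp add: field_simps)
qed

lemma sum_identity:
  fixes a c :: "nat \<Rightarrow> real"
  shows "(\<Sum>k\<le>K. a k * (c k - c (k + r))) =
    (\<Sum>k\<le>K. (a (k + r) - a k) * c (k + r)) + (\<Sum>k<r. a k * c k) - (\<Sum>k=K+1..K+r. a k * c k)"
proof -
  have 1: "(\<Sum>k\<le>K. a k * c k) + (\<Sum>k=K+1..K+r. a k * c k) = (\<Sum>k\<le>K+r. a k * c k)"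
  proof -
    have "{..K+r} = {..K} \<union> {K+1..K+r}" by auto
    then show ?thesis by (simp add: sum.union_disjoint)
  qed
  have 2: "(\<Sum>k\<le>K+r. a k * c k) = (\<Sum>k<r. a k * c k) + (\<Sum>k\<le>K. a (k + r) * c (k + r))"
  proof -
    have "{..K+r} = {..<r} \<union> {r..K+r}" by auto
    then have "(\<Sum>k\<le>K+r. a k * c k) = (\<Sum>k<r. a k * c k) + (\<Sum>k=r..K+r. a k * c k)"
      by (simp, subst sum.union_disjoint, auto)
    also have "(\<Sum>k=r..K+r. a k * c k) = (\<Sum>k=0..K. a (k + r) * c (k + r))"
      using sum.shift_bounds_cl_nat_ivl[of "\<lambda>k. a k * c k" 0 r K] by simp
    finally show ?thesis by (simp add: atLeast0AtMost)
  qed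
  show ?thesis using 1 2 by (simp add: algebra_simps sum_subtractf sum.distrib sum_distrib_left)
qed

lemma sum_bound:
  fixes a c :: "nat \<Rightarrow> real"
  assumes nn: "\<And>k. 0 \<le> a k" and c: "\<And>k. \<bar>c k\<bar> \<le> 1"
  shows "\<bar>\<Sum>k\<le>K. a k * (c k - c (k + r))\<bar> \<le>
    (\<Sum>k\<le>K. \<bar>a k - a (k + r)\<bar>) + (\<Sum>k<r. a k) + (\<Sum>k=K+1..K+r. a k)"
proof -
  have b1: "\<bar>\<Sum>k\<le>K. (a (k + r) - a k) * c (k + r)\<bar> \<le> (\<Sum>k\<le>K. \<bar>a k - a (k + r)\<bar>)"
  proof -
    have "\<bar>\<Sum>k\<le>K. (a (k + r) - a k) * c (k + r)\<bar> \<le> (\<Sum>k\<le>K. \<bar>(a (k + r) - a k) * c (k + r)\<bar>)"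
      by (rule sum_abs)
    also have "\<dots> \<le> (\<Sum>k\<le>K. \<bar>a k - a (k + r)\<bar>)"
      by (intro sum_mono) (simp add: abs_mult abs_minus_commute mult_left_le[OF c])
    finally show ?thesis .
  qed
  have b2: "\<bar>\<Sum>k<r. a k * c k\<bar> \<le> (\<Sum>k<r. a k)"
    by (rule order_trans[OF sum_abs], intro sum_mono) (simp add: abs_mult nn mult_left_le[OF c])
  have b3: "\<bar>\<Sum>k=K+1..K+r. a k * c k\<bar> \<le> (\<Sum>k=K+1..K+r. a k)"
    by (rule order_trans[OF sum_abs], intro sum_mono) (simp add: abs_mult nn mult_left_le[OF c])
  show ?thesis unfolding sum_identity using b1 b2 b3 by linarith
qed



lemma Lnorm_zero_AE:
  assumes s: "0 < s" and g[measurable]: "g \<in> borel_measurable borel" and S[measurable]: "S \<in> sets borel"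
    and L: "Lnorm_le s S g 0"
  shows "AE t in lborel. t \<in> S \<longrightarrow> g t = 0"
proof -
  have "(\<integral>\<^sup>+t. ennreal (\<bar>g t\<bar> powr s) * indicator S t \<partial>lborel) \<le> 0"
    using L s by (simp add: Lnorm_le_def)
  then have "(\<integral>\<^sup>+t. ennreal (\<bar>g t\<bar> powr s) * indicator S t \<partial>lborel) = 0" by simp
  then have "AE t in lborel. ennreal (\<bar>g t\<bar> powr s) * indicator S t = 0"
    by (subst (asm) nn_integral_0_iff_AE) auto
  then show ?thesis by eventually_elim (auto simp: indicator_def)
qed

lemma holder:
  fixes g h :: "real \<Rightarrow> real"
  assumes p: "1 \<le> p" and S[measurable]: "S \<in> sets borel"
    and g[measurable]: "g \<in> borel_measurable borel" and h[measurable]: "h \<in> borel_measurable borel"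
    and Lg: "Lnorm_le p S g X" and Dh: "dual_norm_le p S h Y"
  shows "(\<integral>\<^sup>+s. ennreal (\<bar>g s\<bar> * \<bar>h s\<bar>) * indicator S s \<partial>lborel) \<le> ennreal (X * Y)"
proof (cases "p = 1")
  case True
  have X: "0 \<le> X" and gX: "(\<integral>\<^sup>+s. ennreal (\<bar>g s\<bar>) * indicator S s \<partial>lborel) \<le> ennreal X"
    using Lg True by (auto simp: Lnorm_le_def)
  have hY: "AE s in lborel. s \<in> S \<longrightarrow> \<bar>h s\<bar> \<le> Y"
    using Dh True by (simp add: dual_norm_le_def esssup_le_def)
  show ?thesis
  proof (cases "Y < 0")
    case True
    have nS: "AE s in lborel. s \<notin> S" using hY by (rule eventually_mono) (use True in auto)
    have "(\<integral>\<^sup>+s. ennreal (\<bar>g s\<bar> * \<bar>h s\<bar>) * indicator S s \<partial>lborel) = (\<integral>\<^sup>+s. 0 \<partial>(lborel::real measure))"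
    proof (rule nn_integral_cong_AE)
      show "AE s in lborel. ennreal (\<bar>g s\<bar> * \<bar>h s\<bar>) * indicator S s = 0"
        using nS by (rule eventually_mono) auto
    qed
    then show ?thesis by simp
  next
    case False
    have "(\<integral>\<^sup>+s. ennreal (\<bar>g s\<bar> * \<bar>h s\<bar>) * indicator S s \<partial>lborel)
        \<le> (\<integral>\<^sup>+s. ennreal Y * (ennreal (\<bar>g s\<bar>) * indicator S s) \<partial>lborel)"
      using hY
    proof (intro nn_integral_mono_AE, eventually_elim)
      case (elim s)
      show ?case
      proof (cases "s \<in> S")
        case True
        have hs: "\<bar>h s\<bar> \<le> Y" using elim True by blast
        have "\<bar>g s\<bar> * \<bar>h s\<bar> \<le> \<bar>g s\<bar> * Y" using mult_left_mono[OF hs abs_ge_zero] .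
        then have "\<bar>g s\<bar> * \<bar>h s\<bar> \<le> Y * \<bar>g s\<bar>" by (simp add: mult.commute)
        then have "ennreal (\<bar>g s\<bar> * \<bar>h s\<bar>) \<le> ennreal (Y * \<bar>g s\<bar>)" by (rule ennreal_leI)
        also have "\<dots> = ennreal Y * ennreal \<bar>g s\<bar>" using False by (simp add: ennreal_mult)
        finally show ?thesis using True by simp
      qed simp
    qed
    also have "\<dots> = ennreal Y * (\<integral>\<^sup>+s. ennreal (\<bar>g s\<bar>) * indicator S s \<partial>lborel)"
      by (rule nn_integral_cmult) simp
    also have "\<dots> \<le> ennreal Y * ennreal X" by (intro mult_left_mono gX) simp
    also have "\<dots> = ennreal (X * Y)" using X False by (simp add: ennreal_mult mult.commute)
    finally show ?thesis .
  qed
next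
  case False
  then have p1: "1 < p" using p by simp
  define q where "q = p / (p - 1)"
  have q1: "1 < q" using p1 by (simp add: q_def field_simps)
  have pq: "1/p + 1/q = 1" using p1 by (simp add: q_def field_simps)
  have Lh: "Lnorm_le q S h Y" using Dh False by (simp add: dual_norm_le_def q_def)
  have X: "0 \<le> X" using Lg by (simp add: Lnorm_le_def)
  have Y: "0 \<le> Y" using Lh by (simp add: Lnorm_le_def)
  have gX: "(\<integral>\<^sup>+s. ennreal (\<bar>g s\<bar> powr p) * indicator S s \<partial>lborel) \<le> ennreal (X powr p)"
    using Lg by (simp add: Lnorm_le_def)
  have hY: "(\<integral>\<^sup>+s. ennreal (\<bar>h s\<bar> powr q) * indicator S s \<partial>lborel) \<le> ennreal (Y powr q)"
    using Lh by (simp add: Lnorm_le_def)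
  show ?thesis
  proof (cases "X = 0 \<or> Y = 0")
    case True
    then have "AE s in lborel. s \<in> S \<longrightarrow> g s = 0 \<or> h s = 0"
    proof
      assume "X = 0"
      then have "AE t in lborel. t \<in> S \<longrightarrow> g t = 0" using Lg p1 by (intro Lnorm_zero_AE) auto
      then show ?thesis by eventually_elim auto
    next
      assume "Y = 0"
      then have "AE t in lborel. t \<in> S \<longrightarrow> h t = 0" using Lh q1 by (intro Lnorm_zero_AE) auto
      then show ?thesis by eventually_elim auto
    qed
    then have "(\<integral>\<^sup>+s. ennreal (\<bar>g s\<bar> * \<bar>h s\<bar>) * indicator S s \<partial>lborel) = (\<integral>\<^sup>+s. 0 \<partial>(lborel::real measure))"
      by (intro nn_integral_cong_AE) (auto elim!: eventually_mono simp: indicator_def)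
    then show ?thesis by simp
  next
    case False
    then have Xp: "0 < X" and Yp: "0 < Y" using X Y by auto
    define c1 where "c1 = Y / (p * X powr (p - 1))"
    define c2 where "c2 = X / (q * Y powr (q - 1))"
    have c1: "0 \<le> c1" and c2: "0 \<le> c2" using Xp Yp p1 q1 by (auto simp: c1_def c2_def)
    have pt: "\<bar>g s\<bar> * \<bar>h s\<bar> \<le> c1 * \<bar>g s\<bar> powr p + c2 * \<bar>h s\<bar> powr q" for s
    proof -
      have "(\<bar>g s\<bar> / X) * (\<bar>h s\<bar> / Y) \<le> (\<bar>g s\<bar> / X) powr p / p + (\<bar>h s\<bar> / Y) powr q / q"
        using Youngs_inequality[OF p1 q1 pq, of "\<bar>g s\<bar> / X" "\<bar>h s\<bar> / Y"] Xp Yp by simp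
      then have "X * Y * ((\<bar>g s\<bar> / X) * (\<bar>h s\<bar> / Y)) \<le> X * Y * ((\<bar>g s\<bar> / X) powr p / p + (\<bar>h s\<bar> / Y) powr q / q)"
        using Xp Yp by (intro mult_left_mono) auto
      also have "X * Y * ((\<bar>g s\<bar> / X) powr p / p + (\<bar>h s\<bar> / Y) powr q / q) = c1 * \<bar>g s\<bar> powr p + c2 * \<bar>h s\<bar> powr q"
        using Xp Yp p1 q1
        by (simp add: c1_def c2_def powr_divide powr_diff field_simps)
      finally show ?thesis using Xp Yp by simp
    qed
    have "(\<integral>\<^sup>+s. ennreal (\<bar>g s\<bar> * \<bar>h s\<bar>) * indicator S s \<partial>lborel)
        \<le> (\<integral>\<^sup>+s. ennreal c1 * (ennreal (\<bar>g s\<bar> powr p) * indicator S s) + ennreal c2 * (ennreal (\<bar>h s\<bar> powr q) * indicator S s) \<partial>lborel)"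
    proof (intro nn_integral_mono)
      fix s
      have "ennreal (\<bar>g s\<bar> * \<bar>h s\<bar>) \<le> ennreal (c1 * \<bar>g s\<bar> powr p + c2 * \<bar>h s\<bar> powr q)"
        using pt by (rule ennreal_leI)
      also have "\<dots> = ennreal c1 * ennreal (\<bar>g s\<bar> powr p) + ennreal c2 * ennreal (\<bar>h s\<bar> powr q)"
        using c1 c2 by (simp add: ennreal_plus[symmetric] ennreal_mult[symmetric] del: ennreal_plus)
      finally show "ennreal (\<bar>g s\<bar> * \<bar>h s\<bar>) * indicator S s
          \<le> ennreal c1 * (ennreal (\<bar>g s\<bar> powr p) * indicator S s) + ennreal c2 * (ennreal (\<bar>h s\<bar> powr q) * indicator S s)"
        by (auto simp: indicator_def)
    qed
    also have "\<dots> = ennreal c1 * (\<integral>\<^sup>+s. ennreal (\<bar>g s\<bar> powr p) * indicator S s \<partial>lborel)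
        + ennreal c2 * (\<integral>\<^sup>+s. ennreal (\<bar>h s\<bar> powr q) * indicator S s \<partial>lborel)"
      by (simp add: nn_integral_add nn_integral_cmult)
    also have "\<dots> \<le> ennreal c1 * ennreal (X powr p) + ennreal c2 * ennreal (Y powr q)"
      by (intro add_mono mult_left_mono gX hY) auto
    also have "\<dots> = ennreal (c1 * X powr p + c2 * Y powr q)"
      using c1 c2 by (simp add: ennreal_plus[symmetric] ennreal_mult[symmetric] del: ennreal_plus)
    also have "c1 * X powr p + c2 * Y powr q = X * Y"
    proof -
      have "c1 * X powr p = X * Y / p" using Xp Yp p1
        by (simp add: c1_def powr_diff field_simps)
      moreover have "c2 * Y powr q = X * Y / q" using Xp Yp q1
        by (simp add: c2_def powr_diff field_simps)
      moreover have "X * Y / p + X * Y / q = X * Y * (1/p + 1/q)" by (simp add: field_simps)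
      ultimately show ?thesis using pq by simp
    qed
    finally show ?thesis .
  qed
qed

lemma Lnorm_cong:
  assumes "\<And>s. s \<in> S \<Longrightarrow> g s = g' s"
  shows "Lnorm_le p S g X = Lnorm_le p S g' X"
proof -
  have "(\<integral>\<^sup>+t. ennreal (\<bar>g t\<bar> powr p) * indicator S t \<partial>lborel) = (\<integral>\<^sup>+t. ennreal (\<bar>g' t\<bar> powr p) * indicator S t \<partial>lborel)"
    by (intro nn_integral_cong) (auto simp: indicator_def assms)
  then show ?thesis by (simp add: Lnorm_le_def)
qed

lemma dual_norm_cong:
  assumes "\<And>s. s \<in> S \<Longrightarrow> g s = g' s"
  shows "dual_norm_le p S g X = dual_norm_le p S g' X"
proof -
  have "esssup_le S g X = esssup_le S g' X" unfolding esssup_le_def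
    by (intro AE_cong) (auto simp: assms)
  then show ?thesis using Lnorm_cong[OF assms] by (simp add: dual_norm_le_def)
qed

lemma dual_norm_mono:
  assumes p: "1 \<le> p" and S[measurable]: "S \<in> sets borel" and h[measurable]: "h \<in> borel_measurable borel"
    and c: "0 \<le> c" and le: "\<And>s. s \<in> S \<Longrightarrow> \<bar>h' s\<bar> \<le> c * \<bar>h s\<bar>"
    and D: "dual_norm_le p S h Y"
  shows "dual_norm_le p S h' (c * Y)"
proof (cases "p = 1")
  case True
  then have "AE s in lborel. s \<in> S \<longrightarrow> \<bar>h s\<bar> \<le> Y" using D by (simp add: dual_norm_le_def esssup_le_def)
  then have "AE s in lborel. s \<in> S \<longrightarrow> \<bar>h' s\<bar> \<le> c * Y"
    by eventually_elim (metis c le mult_left_mono order_trans)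
  then show ?thesis using True by (simp add: dual_norm_le_def esssup_le_def)
next
  case False
  define q where "q = p / (p - 1)"
  have q1: "1 < q" using p False by (simp add: q_def field_simps)
  have L: "Lnorm_le q S h Y" using D False by (simp add: dual_norm_le_def q_def)
  then have Y: "0 \<le> Y" and hY: "(\<integral>\<^sup>+s. ennreal (\<bar>h s\<bar> powr q) * indicator S s \<partial>lborel) \<le> ennreal (Y powr q)"
    by (auto simp: Lnorm_le_def)
  have "(\<integral>\<^sup>+s. ennreal (\<bar>h' s\<bar> powr q) * indicator S s \<partial>lborel)
     \<le> (\<integral>\<^sup>+s. ennreal (c powr q) * (ennreal (\<bar>h s\<bar> powr q) * indicator S s) \<partial>lborel)"
  proof (intro nn_integral_mono)
    fix s
    show "ennreal (\<bar>h' s\<bar> powr q) * indicator S s \<le> ennreal (c powr q) * (ennreal (\<bar>h s\<bar> powr q) * indicator S s)"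
    proof (cases "s \<in> S")
      case True
      have "\<bar>h' s\<bar> powr q \<le> (c * \<bar>h s\<bar>) powr q" using le[OF True] q1 by (intro powr_mono2) auto
      also have "\<dots> = c powr q * \<bar>h s\<bar> powr q" using c by (simp add: powr_mult)
      finally show ?thesis using True by (simp add: ennreal_mult[symmetric] ennreal_leI)
    qed simp
  qed
  also have "\<dots> = ennreal (c powr q) * (\<integral>\<^sup>+s. ennreal (\<bar>h s\<bar> powr q) * indicator S s \<partial>lborel)"
    by (rule nn_integral_cmult) simp
  also have "\<dots> \<le> ennreal (c powr q) * ennreal (Y powr q)" by (intro mult_left_mono hY) simp
  also have "\<dots> = ennreal ((c * Y) powr q)" using c Y by (simp add: powr_mult ennreal_mult)
  finally show ?thesis using False c Y by (simp add: dual_norm_le_def q_def Lnorm_le_def)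
qed

lemma aux_le3: "(A::real) \<le> 0 \<Longrightarrow> C = - B \<Longrightarrow> A - B \<le> C" by linarith

definition kap :: "real \<Rightarrow> real \<Rightarrow> real" where
  "kap p e = (if p = 1 then 1 else (1 / (- (e * (p / (p - 1)) + 1))) powr ((p - 1) / p))"

lemma kap_nonneg: "0 \<le> kap p e" by (simp add: kap_def)

lemma dual_norm_powr:
  assumes p: "1 \<le> p" and d: "0 < d" "d \<le> b" and e: "e + 1 - 1/p < 0"
  shows "dual_norm_le p {d..b} (\<lambda>s. s powr e) (kap p e * d powr (e + 1 - 1/p))"
proof (cases "p = 1")
  case True
  have "\<bar>s powr e\<bar> \<le> d powr e" if "s \<in> {d..b}" for s
    using that d e True by (auto intro!: powr_mono2')
  then show ?thesis using True by (auto simp: dual_norm_le_def esssup_le_def kap_def)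
next
  case False
  then have p1: "1 < p" using p by simp
  define q where "q = p / (p - 1)"
  have q1: "1 < q" using p1 by (simp add: q_def field_simps)
  have iq: "1/q = 1 - 1/p" using p1 by (simp add: q_def field_simps)
  define m where "m = e * q"
  have m: "m + 1 < 0"
  proof -
    have "e < - (1/q)" using e iq by simp
    then have "e * q < - (1/q) * q" using q1 by (intro mult_strict_right_mono) auto
    then show ?thesis using q1 by (simp add: m_def)
  qed
  have der: "((\<lambda>s. s powr (m + 1) / (m + 1)) has_real_derivative s powr m) (at s within {d..b})"
    if "s \<in> {d..b}" for s
  proof -
    have "s > 0" using that d by auto
    then have "((\<lambda>s. s powr (m + 1)) has_real_derivative (m + 1) * s powr m) (at s)"
      using has_real_derivative_powr[of s "m+1"] by simp
    then have "((\<lambda>s. s powr (m + 1) / (m + 1)) has_real_derivative s powr m) (at s)"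
      using m \<open>s > 0\<close> by (auto intro!: derivative_eq_intros)
    then show ?thesis by (rule has_field_derivative_at_within)
  qed
  have HI: "((\<lambda>s. s powr m) has_integral (b powr (m + 1) / (m + 1) - d powr (m + 1) / (m + 1))) {d..b}"
    using d der by (intro fundamental_theorem_of_calculus) (auto simp: has_real_derivative_iff_has_vector_derivative[symmetric])
  have "(\<integral>\<^sup>+s. ennreal (\<bar>s powr e\<bar> powr q) * indicator {d..b} s \<partial>lborel)
      = (\<integral>\<^sup>+s. ennreal (indicator {d..b} s * s powr m) \<partial>lborel)"
    by (intro nn_integral_cong) (auto simp: indicator_def powr_powr m_def)
  also have "\<dots> = ennreal (b powr (m + 1) / (m + 1) - d powr (m + 1) / (m + 1))"
    using nn_integral_has_integral_lebesgue[OF _ HI] by simp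
  also have "\<dots> \<le> ennreal (d powr (m + 1) / (- (m + 1)))"
  proof (intro ennreal_leI)
    have f1: "b powr (m + 1) / (m + 1) \<le> 0" using m by (simp add: divide_nonneg_neg)
    have f2: "d powr (m + 1) / (- (m + 1)) = - (d powr (m + 1) / (m + 1))" by (metis minus_divide_right)
    show "b powr (m + 1) / (m + 1) - d powr (m + 1) / (m + 1) \<le> d powr (m + 1) / (- (m + 1))"
      using f1 f2 by (smt (verit))
  qed
  also have "d powr (m + 1) / (- (m + 1)) = (kap p e * d powr (e + 1 - 1/p)) powr q"
  proof -
    have k: "kap p e = (1 / (- (m + 1))) powr (1/q)"
      using False p1 by (simp add: kap_def m_def q_def)
    have ex: "(e + 1 - 1/p) * q = m + 1"
    proof -
      have "q - q/p = 1" using iq q1 by (simp add: field_simps)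
      then show ?thesis by (simp add: m_def algebra_simps)
    qed
    have "(kap p e * d powr (e + 1 - 1/p)) powr q = ((1 / (- (m + 1))) powr (1/q)) powr q * (d powr (e + 1 - 1/p)) powr q"
      using m d by (simp add: k powr_mult)
    also have "\<dots> = (1 / (- (m + 1))) * d powr (m + 1)"
      using m d q1 by (simp add: powr_powr ex)
    finally show ?thesis by simp
  qed
  finally show ?thesis using False q1 d by (simp add: dual_norm_le_def Lnorm_le_def q_def kap_nonneg)
qed



lemma ind_shift: "indicator {a..b} (c + t) = (indicator {a-c..b-c} (t::real) :: real)"
  by (auto simp: indicator_def)

lemma set_translate:
  fixes F :: "real \<Rightarrow> real"
  shows "set_integrable lborel {a..b} F \<longleftrightarrow> set_integrable lborel {a-c..b-c} (\<lambda>t. F (c + t))"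
    and "(LBINT u:{a..b}. F u) = (LBINT t:{a-c..b-c}. F (c + t))"
proof -
  have "integrable lborel (\<lambda>u. indicator {a..b} u *\<^sub>R F u) \<longleftrightarrow>
        integrable lborel (\<lambda>t. indicator {a..b} (c + 1 * t) *\<^sub>R F (c + 1 * t))"
    by (rule lborel_integrable_real_affine_iff[symmetric]) simp
  then show "set_integrable lborel {a..b} F \<longleftrightarrow> set_integrable lborel {a-c..b-c} (\<lambda>t. F (c + t))"
    unfolding set_integrable_def by (simp add: ind_shift)
  have "(\<integral>u. indicator {a..b} u *\<^sub>R F u \<partial>lborel) = \<bar>1\<bar> *\<^sub>R (\<integral>t. indicator {a..b} (c + 1 * t) *\<^sub>R F (c + 1 * t) \<partial>lborel)"
    by (rule lborel_integral_real_affine) simp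
  then show "(LBINT u:{a..b}. F u) = (LBINT t:{a-c..b-c}. F (c + t))"
    unfolding set_lebesgue_integral_def by (simp add: ind_shift)
qed

lemma set_reflect:
  fixes F :: "real \<Rightarrow> real"
  shows "set_integrable lborel {a..b} F \<longleftrightarrow> set_integrable lborel {-b..-a} (\<lambda>t. F (- t))"
    and "(LBINT u:{a..b}. F u) = (LBINT t:{-b..-a}. F (- t))"
proof -
  have i: "indicator {a..b} (0 + (-1) * t) = (indicator {-b..-a} t :: real)" for t
    by (auto simp: indicator_def)
  have "integrable lborel (\<lambda>u. indicator {a..b} u *\<^sub>R F u) \<longleftrightarrow>
        integrable lborel (\<lambda>t. indicator {a..b} (0 + (-1) * t) *\<^sub>R F (0 + (-1) * t))"
    by (rule lborel_integrable_real_affine_iff[symmetric]) simp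
  then show "set_integrable lborel {a..b} F \<longleftrightarrow> set_integrable lborel {-b..-a} (\<lambda>t. F (- t))"
    unfolding set_integrable_def by (simp only: i) simp
  have "(\<integral>u. indicator {a..b} u *\<^sub>R F u \<partial>lborel) = \<bar>-1\<bar> *\<^sub>R (\<integral>t. indicator {a..b} (0 + (-1) * t) *\<^sub>R F (0 + (-1) * t) \<partial>lborel)"
    by (rule lborel_integral_real_affine) simp
  then show "(LBINT u:{a..b}. F u) = (LBINT t:{-b..-a}. F (- t))"
    unfolding set_lebesgue_integral_def by (simp only: i) simp
qed

lemma periodic_int_all:
  fixes F :: "real \<Rightarrow> real"
  assumes per: "\<And>u. F (u + 2*pi) = F u"
  shows "F (u + 2*pi*real_of_int j) = F u"
proof -
  have pos: "F (u + 2*pi*real n) = F u" for u n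
  proof (induction n arbitrary: u)
    case (Suc n)
    have "F (u + 2*pi*real (Suc n)) = F ((u + 2*pi*real n) + 2*pi)" by (simp add: algebra_simps)
    then show ?case using per Suc by simp
  qed simp
  show ?thesis
  proof (cases "j \<ge> 0")
    case True
    then show ?thesis using pos[of u "nat j"] by simp
  next
    case False
    have "F ((u + 2*pi*real_of_int j) + 2*pi*real (nat (-j))) = F (u + 2*pi*real_of_int j)" by (rule pos)
    moreover have "(u + 2*pi*real_of_int j) + 2*pi*real (nat (-j)) = u" using False by simp
    ultimately show ?thesis by simp
  qed
qed

lemma AE_pt: "AE x in lborel. x \<noteq> (c::real)"
  by (rule eventually_mono[OF AE_lborel_singleton[of c]]) auto

lemma periodic_int:
  fixes F :: "real \<Rightarrow> real"
  assumes per: "\<And>u. F (u + 2*pi) = F u"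
    and int: "set_integrable lborel {-pi..pi} F"
  shows "set_integrable lborel {x-pi..x+pi} F \<and> (LBINT u:{x-pi..x+pi}. F u) = (LBINT u:{-pi..pi}. F u)"
proof -
  have step: "set_integrable lborel {y-pi..y+pi} F \<and> (LBINT u:{y-pi..y+pi}. F u) = (LBINT u:{-pi..pi}. F u)"
    if y: "0 \<le> y" "y \<le> 2*pi" for y
  proof -
    have i1: "set_integrable lborel {y-pi..pi} F"
      by (rule set_integrable_subset[OF int]) (use y in auto)
    have i0: "set_integrable lborel {-pi..y-pi} F"
      by (rule set_integrable_subset[OF int]) (use y in auto)
    have sh: "(\<lambda>t. F (-2*pi + t)) = F"
    proof
      fix t show "F (-2*pi + t) = F t" using per[of "-2*pi + t"] by simp
    qed
    have i2: "set_integrable lborel {pi..y+pi} F" and e2: "(LBINT u:{pi..y+pi}. F u) = (LBINT u:{-pi..y-pi}. F u)"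
    proof -
      have "set_integrable lborel {-pi..y-pi} F \<longleftrightarrow> set_integrable lborel {-pi-(-2*pi)..y-pi-(-2*pi)} (\<lambda>t. F (-2*pi + t))"
        by (rule set_translate(1))
      moreover have b1: "-pi-(-2*pi) = pi" "y-pi-(-2*pi) = y+pi" by simp_all
      ultimately show "set_integrable lborel {pi..y+pi} F" using i0 by (simp only: sh b1)
      have "(LBINT u:{-pi..y-pi}. F u) = (LBINT t:{-pi-(-2*pi)..y-pi-(-2*pi)}. F (-2*pi + t))"
        by (rule set_translate(2))
      then show "(LBINT u:{pi..y+pi}. F u) = (LBINT u:{-pi..y-pi}. F u)" by (simp only: sh b1)
    qed
    have U1: "{y-pi..y+pi} = {y-pi..pi} \<union> {pi..y+pi}" using y by auto
    have U2: "{-pi..pi} = {-pi..y-pi} \<union> {y-pi..pi}" using y by auto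
    have "set_integrable lborel {y-pi..y+pi} F" unfolding U1 by (rule set_integrable_Un[OF i1 i2]) auto
    moreover have "(LBINT u:{y-pi..y+pi}. F u) = (LBINT u:{y-pi..pi}. F u) + (LBINT u:{pi..y+pi}. F u)"
      unfolding U1 by (rule set_integral_Un_AE[OF _ _ _ i1 i2]) (auto intro: eventually_mono[OF AE_pt[of pi]])
    moreover have "(LBINT u:{-pi..pi}. F u) = (LBINT u:{-pi..y-pi}. F u) + (LBINT u:{y-pi..pi}. F u)"
      unfolding U2 by (rule set_integral_Un_AE[OF _ _ _ i0 i1]) (auto intro: eventually_mono[OF AE_pt[of "y-pi"]])
    ultimately show ?thesis using e2 by simp
  qed
  define j where "j = \<lfloor>x / (2*pi)\<rfloor>"
  define y where "y = x - 2*pi*real_of_int j"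
  have y: "0 \<le> y" "y \<le> 2*pi"
  proof -
    have "real_of_int j \<le> x / (2*pi)" "x / (2*pi) < real_of_int j + 1" unfolding j_def by linarith+
    then have "2*pi*real_of_int j \<le> x" "x < 2*pi*(real_of_int j + 1)"
      by (simp_all add: field_simps)
    then show "0 \<le> y" "y \<le> 2*pi" unfolding y_def by (simp_all add: algebra_simps)
  qed
  note S = step[OF y]
  have sh: "(\<lambda>t. F (- (2*pi*real_of_int j) + t)) = F"
  proof
    fix t show "F (- (2*pi*real_of_int j) + t) = F t"
      using periodic_int_all[where F=F, OF per, of "- (2*pi*real_of_int j) + t" j] by simp
  qed
  have xy: "y - pi - (- (2*pi*real_of_int j)) = x - pi" "y + pi - (- (2*pi*real_of_int j)) = x + pi"
    by (simp_all add: y_def)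
  have "set_integrable lborel {y-pi..y+pi} F \<longleftrightarrow> set_integrable lborel {y-pi-(- (2*pi*real_of_int j))..y+pi-(- (2*pi*real_of_int j))} (\<lambda>t. F (- (2*pi*real_of_int j) + t))"
    by (rule set_translate(1))
  then have A: "set_integrable lborel {x-pi..x+pi} F" using S by (simp only: sh xy)
  have "(LBINT u:{y-pi..y+pi}. F u) = (LBINT t:{y-pi-(- (2*pi*real_of_int j))..y+pi-(- (2*pi*real_of_int j))}. F (- (2*pi*real_of_int j) + t))"
    by (rule set_translate(2))
  then have "(LBINT u:{y-pi..y+pi}. F u) = (LBINT u:{x-pi..x+pi}. F u)" by (simp only: sh xy)
  then show ?thesis using A S by simp
qed



lemma Dk_cont: "continuous_on UNIV (\<lambda>u. Dk k (u - x))"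
  unfolding Dk_def by (intro continuous_intros)

lemma Dk_cont0: "continuous_on A (Dk k)"
  unfolding Dk_def by (intro continuous_intros)

lemma Dk_meas[measurable]: "(\<lambda>u. Dk k (u - x)) \<in> borel_measurable borel"
  by (rule borel_measurable_continuous_onI[OF Dk_cont])

lemma Dk_meas0[measurable]: "Dk k \<in> borel_measurable borel"
  using Dk_meas[of k 0] by simp

lemma Dk_abs: "\<bar>Dk k t\<bar> \<le> real k + 1"
proof -
  have "\<bar>\<Sum>\<nu>=1..k. cos (real \<nu> * t)\<bar> \<le> (\<Sum>\<nu>=1..k. 1)"
    by (rule order_trans[OF sum_abs]) (intro sum_mono, simp)
  then show ?thesis unfolding Dk_def by simp
qed

lemma Dk_even: "Dk k (- t) = Dk k t"
  unfolding Dk_def by simp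

lemma Dk_per: "Dk k (t + 2*pi) = Dk k t"
proof -
  have "cos (real \<nu> * (t + 2*pi)) = cos (real \<nu> * t)" for \<nu>
  proof -
    have "real \<nu> * (t + 2*pi) = real \<nu> * t + 2 * real \<nu> * pi" by (simp add: algebra_simps)
    then show ?thesis by (simp add: cos_add)
  qed
  then show ?thesis unfolding Dk_def by simp
qed

lemma mult_bounded_int:
  fixes f g :: "real \<Rightarrow> real"
  assumes fi: "set_integrable lborel S f" and g[measurable]: "g \<in> borel_measurable borel"
    and B: "\<And>u. u \<in> S \<Longrightarrow> \<bar>g u\<bar> \<le> B"
  shows "set_integrable lborel S (\<lambda>u. f u * g u)"
proof (rule set_integrable_bound[where f="\<lambda>u. B * f u"])
  show "set_integrable lborel S (\<lambda>u. B * f u)" using fi by (rule set_integrable_mult_right)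
  have m: "(\<lambda>x. indicator S x *\<^sub>R f x) \<in> borel_measurable lborel"
    using fi unfolding set_integrable_def by (rule borel_measurable_integrable)
  have "(\<lambda>x. (indicator S x *\<^sub>R f x) * g x) \<in> borel_measurable lborel"
    using m by measurable
  then show "set_borel_measurable lborel S (\<lambda>u. f u * g u)"
    unfolding set_borel_measurable_def by (simp add: mult.assoc)
  show "AE x in lborel. x \<in> S \<longrightarrow> norm (f x * g x) \<le> norm (B * f x)"
  proof (intro AE_I2 impI)
    fix x assume x: "x \<in> S"
    have "\<bar>f x\<bar> * \<bar>g x\<bar> \<le> \<bar>f x\<bar> * B" using B[OF x] by (intro mult_left_mono) auto
    also have "\<dots> \<le> \<bar>B\<bar> * \<bar>f x\<bar>" by (simp add: mult.commute mult_right_mono)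
    finally show "norm (f x * g x) \<le> norm (B * f x)" by (simp add: abs_mult)
  qed
qed

lemma inLp_int:
  assumes hf: "in_Lp p f" and p: "1 \<le> p"
  shows "set_integrable lborel {-pi..pi} f"
proof (rule set_integrable_bound[where f="\<lambda>t. 1 + \<bar>f t\<bar> powr p"])
  have fm[measurable]: "f \<in> borel_measurable borel" using hf by (simp add: in_Lp_def)
  have i1: "set_integrable lborel {-pi..pi} (\<lambda>t. 1::real)"
    by (rule borel_integrable_atLeastAtMost') (intro continuous_intros)
  show "set_integrable lborel {-pi..pi} (\<lambda>t. 1 + \<bar>f t\<bar> powr p)"
    using i1 hf by (intro set_integral_add) (auto simp: in_Lp_def)
  show "set_borel_measurable lborel {-pi..pi} f"
    unfolding set_borel_measurable_def by measurable
  show "AE x in lborel. x \<in> {-pi..pi} \<longrightarrow> norm (f x) \<le> norm (1 + \<bar>f x\<bar> powr p)"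
  proof (intro AE_I2 impI)
    fix x
    have "\<bar>f x\<bar> \<le> 1 + \<bar>f x\<bar> powr p"
    proof (cases "\<bar>f x\<bar> \<le> 1")
      case True
      have "0 \<le> \<bar>f x\<bar> powr p" by simp
      then show ?thesis using True by linarith
    next
      case False
      then have "\<bar>f x\<bar> powr 1 \<le> \<bar>f x\<bar> powr p" using p by (intro powr_mono) auto
      then show ?thesis using False by simp
    qed
    then show "norm (f x) \<le> norm (1 + \<bar>f x\<bar> powr p)" by simp
  qed
qed

lemma int_cos0: "(LBINT t:{0..pi}. cos (real (Suc k) * t)) = 0"
proof -
  define c where "c = real (Suc k)"
  have c: "c > 0" by (simp add: c_def)
  have si: "set_integrable lborel {0..pi} (\<lambda>t. cos (c * t))"
    by (rule borel_integrable_atLeastAtMost') (intro continuous_intros)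
  have "((\<lambda>t. cos (c * t)) has_integral (sin (c * pi) / c - sin (c * 0) / c)) {0..pi}"
  proof (rule fundamental_theorem_of_calculus)
    show "0 \<le> pi" by simp
    fix t assume "t \<in> {0..pi}"
    have "((\<lambda>t. sin (c * t) / c) has_real_derivative cos (c * t)) (at t)"
      using c by (auto intro!: derivative_eq_intros)
    then show "((\<lambda>t. sin (c * t) / c) has_vector_derivative cos (c * t)) (at t within {0..pi})"
      by (simp add: has_real_derivative_iff_has_vector_derivative[symmetric] has_field_derivative_at_within)
  qed
  moreover have "sin (c * pi) = 0" using sin_npi[of "Suc k"] by (simp add: c_def)
  ultimately have "integral {0..pi} (\<lambda>t. cos (c * t)) = 0"
    by (simp add: integral_unique)
  then show ?thesis using set_borel_integral_eq_integral(2)[OF si] by (simp add: c_def)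
qed

lemma Dk_int: "set_integrable lborel {0..pi} (Dk k) \<and> (LBINT t:{0..pi}. Dk k t) = pi / 2"
proof (induction k)
  case 0
  have "set_integrable lborel {0..pi} (\<lambda>t. 1/2::real)"
    by (rule borel_integrable_atLeastAtMost') (intro continuous_intros)
  moreover have "(LBINT t:{0..pi}. (1/2::real)) = pi / 2"
    by (subst set_integral_const) (auto simp: measure_lborel_Icc)
  ultimately show ?case by (simp add: Dk_def)
next
  case (Suc k)
  have e: "Dk (Suc k) = (\<lambda>t. Dk k t + cos (real (Suc k) * t))"
    by (auto simp: Dk_def)
  have ci: "set_integrable lborel {0..pi} (\<lambda>t. cos (real (Suc k) * t))"
    by (rule borel_integrable_atLeastAtMost') (intro continuous_intros)
  show ?case unfolding e using Suc ci int_cos0[of k] by (simp add: set_integral_add)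
qed



lemma ps_int:
  fixes f :: "real \<Rightarrow> real"
  assumes fm[measurable]: "f \<in> borel_measurable borel" and fi: "set_integrable lborel {-pi..pi} f"
  shows "fourier_partial_sum f k x = (LBINT u:{-pi..pi}. f u * Dk k (u - x)) / pi"
proof (induction k)
  case 0
  show ?case by (simp add: fourier_partial_sum_def fourier_a_def Dk_def)
next
  case (Suc k)
  define \<nu> where "\<nu> = real (Suc k)"
  have ic: "set_integrable lborel {-pi..pi} (\<lambda>u. f u * cos (\<nu> * u))"
    by (rule mult_bounded_int[OF fi, where B=1]) auto
  have isn: "set_integrable lborel {-pi..pi} (\<lambda>u. f u * sin (\<nu> * u))"
    by (rule mult_bounded_int[OF fi, where B=1]) auto
  have icx: "set_integrable lborel {-pi..pi} (\<lambda>u. f u * cos (\<nu> * (u - x)))"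
    by (rule mult_bounded_int[OF fi, where B=1]) auto
  have iD: "set_integrable lborel {-pi..pi} (\<lambda>u. f u * Dk k (u - x))"
    by (rule mult_bounded_int[OF fi, where B="real k + 1"]) (auto simp: Dk_abs)
  have trm: "fourier_a f (Suc k) * cos (\<nu> * x) + fourier_b f (Suc k) * sin (\<nu> * x)
      = (LBINT u:{-pi..pi}. f u * cos (\<nu> * (u - x))) / pi"
  proof -
    have "fourier_a f (Suc k) * cos (\<nu> * x) + fourier_b f (Suc k) * sin (\<nu> * x)
      = ((LBINT u:{-pi..pi}. f u * cos (\<nu> * u)) * cos (\<nu> * x) + (LBINT u:{-pi..pi}. f u * sin (\<nu> * u)) * sin (\<nu> * x)) / pi"
      by (simp add: fourier_a_def fourier_b_def \<nu>_def add_divide_distrib)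
    also have "(LBINT u:{-pi..pi}. f u * cos (\<nu> * u)) * cos (\<nu> * x) = (LBINT u:{-pi..pi}. f u * cos (\<nu> * u) * cos (\<nu> * x))"
      by simp
    also have "(LBINT u:{-pi..pi}. f u * sin (\<nu> * u)) * sin (\<nu> * x) = (LBINT u:{-pi..pi}. f u * sin (\<nu> * u) * sin (\<nu> * x))"
      by simp
    also have "(LBINT u:{-pi..pi}. f u * cos (\<nu> * u) * cos (\<nu> * x)) + (LBINT u:{-pi..pi}. f u * sin (\<nu> * u) * sin (\<nu> * x))
        = (LBINT u:{-pi..pi}. f u * cos (\<nu> * u) * cos (\<nu> * x) + f u * sin (\<nu> * u) * sin (\<nu> * x))"
      by (rule set_integral_add(2)[symmetric]) (use ic isn in auto)
    also have "\<dots> = (LBINT u:{-pi..pi}. f u * cos (\<nu> * (u - x)))"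
      by (simp add: right_diff_distrib cos_diff algebra_simps)
    finally show ?thesis .
  qed
  have "fourier_partial_sum f (Suc k) x = fourier_partial_sum f k x
      + (fourier_a f (Suc k) * cos (\<nu> * x) + fourier_b f (Suc k) * sin (\<nu> * x))"
    by (simp add: fourier_partial_sum_def \<nu>_def)
  also have "\<dots> = ((LBINT u:{-pi..pi}. f u * Dk k (u - x)) + (LBINT u:{-pi..pi}. f u * cos (\<nu> * (u - x)))) / pi"
    using Suc trm by (simp add: add_divide_distrib)
  also have "(LBINT u:{-pi..pi}. f u * Dk k (u - x)) + (LBINT u:{-pi..pi}. f u * cos (\<nu> * (u - x)))
      = (LBINT u:{-pi..pi}. f u * Dk k (u - x) + f u * cos (\<nu> * (u - x)))"
    by (rule set_integral_add(2)[symmetric, OF iD icx])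
  also have "\<dots> = (LBINT u:{-pi..pi}. f u * Dk (Suc k) (u - x))"
    by (simp add: Dk_def \<nu>_def algebra_simps)
  finally show ?case .
qed

lemma shift_int:
  fixes F :: "real \<Rightarrow> real"
  assumes per: "\<And>u. F (u + 2*pi) = F u" and fi: "set_integrable lborel {-pi..pi} F"
  shows "set_integrable lborel {-pi..pi} (\<lambda>t. F (x + t))"
    and "(LBINT u:{-pi..pi}. F u) = (LBINT t:{-pi..pi}. F (x + t))"
proof -
  note P = periodic_int[where F=F, OF per fi, of x]
  have b: "x - pi - x = -pi" "x + pi - x = pi" by simp_all
  show "set_integrable lborel {-pi..pi} (\<lambda>t. F (x + t))"
    using P set_translate(1)[of "x-pi" "x+pi" F x] by (simp only: b)
  show "(LBINT u:{-pi..pi}. F u) = (LBINT t:{-pi..pi}. F (x + t))"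
    using P set_translate(2)[of "x-pi" "x+pi" F x] by (simp only: b)
qed

lemma split_reflect:
  fixes G :: "real \<Rightarrow> real"
  assumes gi: "set_integrable lborel {-pi..pi} G"
  shows "set_integrable lborel {0..pi} G" "set_integrable lborel {0..pi} (\<lambda>t. G (- t))"
    and "(LBINT t:{-pi..pi}. G t) = (LBINT t:{0..pi}. G t + G (- t))"
proof -
  have i1: "set_integrable lborel {-pi..0} G" by (rule set_integrable_subset[OF gi]) auto
  show i2: "set_integrable lborel {0..pi} G" by (rule set_integrable_subset[OF gi]) auto
  show i3: "set_integrable lborel {0..pi} (\<lambda>t. G (- t))"
    using i1 set_reflect(1)[of "-pi" 0 G] by simp
  have U: "{-pi..pi} = {-pi..0} \<union> {0..pi}" by auto
  have "(LBINT t:{-pi..pi}. G t) = (LBINT t:{-pi..0}. G t) + (LBINT t:{0..pi}. G t)"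
    unfolding U by (rule set_integral_Un_AE[OF _ _ _ i1 i2]) (auto intro: eventually_mono[OF AE_pt[of 0]])
  also have "(LBINT t:{-pi..0}. G t) = (LBINT t:{0..pi}. G (- t))"
    using set_reflect(2)[of "-pi" 0 G] by simp
  also have "(LBINT t:{0..pi}. G (- t)) + (LBINT t:{0..pi}. G t) = (LBINT t:{0..pi}. G t + G (- t))"
    using set_integral_add(2)[OF i2 i3] by simp
  finally show "(LBINT t:{-pi..pi}. G t) = (LBINT t:{0..pi}. G t + G (- t))" .
qed

lemma phi_int:
  fixes f :: "real \<Rightarrow> real"
  assumes fm[measurable]: "f \<in> borel_measurable borel" and per: "\<And>u. f (u + 2*pi) = f u"
    and fi: "set_integrable lborel {-pi..pi} f"
  shows "set_integrable lborel {0..pi} (phi f x)"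
proof -
  have a: "set_integrable lborel {-pi..pi} (\<lambda>t. f (x + t))" by (rule shift_int(1)[OF per fi])
  note S = split_reflect[OF a]
  have c: "set_integrable lborel {0..pi} (\<lambda>t. 2 * f x)"
    by (rule borel_integrable_atLeastAtMost') (intro continuous_intros)
  have "set_integrable lborel {0..pi} (\<lambda>t. (f (x + t) + f (x + - t)) - 2 * f x)"
    using S(1,2) c by (intro set_integral_diff set_integral_add)
  then show ?thesis by (simp add: phi_def[abs_def])
qed

lemma rep:
  fixes f :: "real \<Rightarrow> real"
  assumes fm[measurable]: "f \<in> borel_measurable borel" and per: "\<And>u. f (u + 2*pi) = f u"
    and fi: "set_integrable lborel {-pi..pi} f"
  shows "set_integrable lborel {0..pi} (\<lambda>t. phi f x t * Dk k t)"
    and "fourier_partial_sum f k x - f x = (LBINT t:{0..pi}. phi f x t * Dk k t) / pi"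
proof -
  show I: "set_integrable lborel {0..pi} (\<lambda>t. phi f x t * Dk k t)"
    by (rule mult_bounded_int[OF phi_int[OF fm per fi], where B="real k + 1"]) (auto simp: Dk_abs)
  define F where "F u = f u * Dk k (u - x)" for u
  have Fper: "F (u + 2*pi) = F u" for u
  proof -
    have "Dk k (u + 2*pi - x) = Dk k (u - x)" using Dk_per[of k "u - x"] by (simp add: algebra_simps)
    then show ?thesis by (simp add: F_def per)
  qed
  have Fi: "set_integrable lborel {-pi..pi} F"
    unfolding F_def by (rule mult_bounded_int[OF fi, where B="real k + 1"]) (auto simp: Dk_abs)
  define G where "G t = f (x + t) * Dk k t" for t
  have FG: "(\<lambda>t. F (x + t)) = G" by (auto simp: F_def G_def)
  have Gi: "set_integrable lborel {-pi..pi} G" using shift_int(1)[OF Fper Fi, of x] by (simp add: FG)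
  have "fourier_partial_sum f k x = (LBINT u:{-pi..pi}. F u) / pi"
    using ps_int[OF fm fi] by (simp add: F_def)
  also have "(LBINT u:{-pi..pi}. F u) = (LBINT t:{-pi..pi}. G t)"
    using shift_int(2)[OF Fper Fi, of x] by (simp add: FG)
  also have "\<dots> = (LBINT t:{0..pi}. G t + G (- t))" by (rule split_reflect(3)[OF Gi])
  finally have ps: "fourier_partial_sum f k x = (LBINT t:{0..pi}. G t + G (- t)) / pi" .
  have Gi2: "set_integrable lborel {0..pi} (\<lambda>t. G t + G (- t))"
    using split_reflect(1,2)[OF Gi] by (intro set_integral_add)
  have Di: "set_integrable lborel {0..pi} (\<lambda>t. 2 * f x * Dk k t)"
    using Dk_int[of k] by (intro set_integrable_mult_right) auto
  have "(LBINT t:{0..pi}. phi f x t * Dk k t) = (LBINT t:{0..pi}. (G t + G (- t)) - 2 * f x * Dk k t)"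
    by (intro set_lebesgue_integral_cong) (auto simp: phi_def G_def Dk_even algebra_simps)
  also have "\<dots> = (LBINT t:{0..pi}. G t + G (- t)) - (LBINT t:{0..pi}. 2 * f x * Dk k t)"
    by (rule set_integral_diff(2)[OF Gi2 Di])
  also have "(LBINT t:{0..pi}. 2 * f x * Dk k t) = 2 * f x * (pi / 2)"
    using Dk_int[of k] by simp
  finally show "fourier_partial_sum f k x - f x = (LBINT t:{0..pi}. phi f x t * Dk k t) / pi"
    using ps by (simp add: field_simps)
qed



lemma jordan:
  assumes "0 \<le> x" "x \<le> pi/2"
  shows "2 * x / pi \<le> sin x"
proof -
  define g where "g y = sin y - 2 * y / pi" for y
  have gd: "DERIV g y :> cos y - 2 / pi" for y
    unfolding g_def by (auto intro!: derivative_eq_intros)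
  have gc: "continuous_on A g" for A unfolding g_def by (intro continuous_intros) auto
  have "0 \<le> g x"
  proof (cases "cos x \<ge> 2 / pi")
    case True
    have "g 0 \<le> g x"
    proof (rule DERIV_nonneg_imp_increasing_open[OF assms(1) _ gc])
      fix y assume y: "0 < y" "y < x"
      have "cos x \<le> cos y" using y assms by (intro cos_monotone_0_pi_le) auto
      then show "\<exists>d. DERIV g y :> d \<and> d \<ge> 0" using gd True by force
    qed
    then show ?thesis by (simp add: g_def)
  next
    case False
    have "g x \<ge> g (pi/2)"
    proof (rule DERIV_nonpos_imp_decreasing_open[OF assms(2) _ gc])
      fix y assume y: "x < y" "y < pi/2"
      have "cos y \<le> cos x" using y assms by (intro cos_monotone_0_pi_le) auto
      then show "\<exists>d. DERIV g y :> d \<and> d \<le> 0" using gd False by force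
    qed
    then show ?thesis by (simp add: g_def)
  qed
  then show ?thesis by (simp add: g_def)
qed

lemma sin_half_lb:
  fixes y :: real
  assumes "0 \<le> y" "y \<le> pi"
  shows "y / pi \<le> sin (y / 2)"
  using jordan[of "y / 2"] assms by simp

lemma sin_r_lb:
  assumes r: "0 < r" and s: "0 \<le> s" "s \<le> pi / r"
  shows "r * s / pi \<le> sin (r * s / 2)"
proof -
  have "r * s \<le> pi" using s r by (simp add: field_simps)
  then show ?thesis using jordan[of "r * s / 2"] s r by simp
qed

lemma mod_mono: "modulus_type \<omega> \<Longrightarrow> 0 \<le> x \<Longrightarrow> x \<le> y \<Longrightarrow> y \<le> 2*pi \<Longrightarrow> \<omega> x \<le> \<omega> y"
  unfolding modulus_type_def mono_on_def by auto

lemma mod_nonneg: "modulus_type \<omega> \<Longrightarrow> 0 \<le> x \<Longrightarrow> x \<le> 2*pi \<Longrightarrow> 0 \<le> \<omega> x"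
  using mod_mono[of \<omega> 0 x] by (simp add: modulus_type_def)

lemma mod_mult:
  assumes w: "modulus_type \<omega>" and x: "0 \<le> x" and m: "real m * x \<le> 2*pi"
  shows "\<omega> (real m * x) \<le> real m * \<omega> x"
  using m
proof (induction m)
  case 0 then show ?case using w by (simp add: modulus_type_def)
next
  case (Suc m)
  have mx: "real m * x \<le> 2*pi" using Suc.prems x by (simp add: algebra_simps)
  show ?case
  proof (cases "m = 0")
    case True then show ?thesis by simp
  next
    case False
    then have "x \<le> real m * x" using x by (simp add: mult_le_cancel_right1)
    then have "\<omega> (x + real m * x) \<le> \<omega> x + \<omega> (real m * x)"
      using w x Suc.prems unfolding modulus_type_def by (auto simp: algebra_simps)
    also have "\<dots> \<le> \<omega> x + real m * \<omega> x" using Suc.IH[OF mx] by simp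
    finally show ?thesis by (simp add: algebra_simps)
  qed
qed

lemma mod_ratio:
  assumes w: "modulus_type \<omega>" and ab: "0 < a" "a \<le> b" "b \<le> pi"
  shows "\<omega> b * a \<le> 2 * \<omega> a * b"
proof -
  define k where "k = nat \<lceil>b / a\<rceil>"
  have k1: "b / a \<le> real k" unfolding k_def by linarith
  have k2: "real k < b / a + 1" unfolding k_def using ab by (simp add: divide_nonneg_pos) linarith
  have ka1: "b \<le> real k * a" using k1 ab by (simp add: field_simps)
  have ka2: "real k * a < b + a" using k2 ab by (simp add: field_simps)
  have "\<omega> b \<le> \<omega> (real k * a)" using ka1 ka2 ab by (intro mod_mono[OF w]) auto
  also have "\<dots> \<le> real k * \<omega> a" using ka2 ab by (intro mod_mult[OF w]) auto
  finally have "\<omega> b * a \<le> real k * \<omega> a * a" using ab by (simp add: mult_right_mono)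
  also have "\<dots> = (real k * a) * \<omega> a" by simp
  also have "\<dots> \<le> (b + a) * \<omega> a" using ka2 mod_nonneg[OF w, of a] ab by (intro mult_right_mono) auto
  also have "\<dots> \<le> 2 * \<omega> a * b"
  proof -
    have "a * \<omega> a \<le> b * \<omega> a" using ab mod_nonneg[OF w, of a] by (intro mult_right_mono) auto
    then show ?thesis by (simp add: algebra_simps)
  qed
  finally show ?thesis .
qed

lemma holder2:
  fixes g h F :: "real \<Rightarrow> real"
  assumes p: "1 \<le> p" and S[measurable]: "S \<in> sets borel"
    and g[measurable]: "g \<in> borel_measurable borel" and h[measurable]: "h \<in> borel_measurable borel"
    and Lg: "Lnorm_le p S g X" and Dh: "dual_norm_le p S h Y" and K: "0 \<le> K"
    and le: "AE s in lborel. s \<in> S \<longrightarrow> F s \<le> K * (\<bar>g s\<bar> * \<bar>h s\<bar>)"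
  shows "(\<integral>\<^sup>+s. ennreal (F s) * indicator S s \<partial>lborel) \<le> ennreal (K * (X * Y))"
proof -
  have "(\<integral>\<^sup>+s. ennreal (F s) * indicator S s \<partial>lborel) \<le> (\<integral>\<^sup>+s. ennreal K * (ennreal (\<bar>g s\<bar> * \<bar>h s\<bar>) * indicator S s) \<partial>lborel)"
    using le
  proof (intro nn_integral_mono_AE, eventually_elim)
    case (elim s)
    show ?case
    proof (cases "s \<in> S")
      case True
      then have "ennreal (F s) \<le> ennreal (K * (\<bar>g s\<bar> * \<bar>h s\<bar>))" using elim by (intro ennreal_leI) auto
      also have "\<dots> = ennreal K * ennreal (\<bar>g s\<bar> * \<bar>h s\<bar>)" using K by (rule ennreal_mult')
      finally show ?thesis using True by simp
    qed simp
  qed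
  also have "\<dots> = ennreal K * (\<integral>\<^sup>+s. ennreal (\<bar>g s\<bar> * \<bar>h s\<bar>) * indicator S s \<partial>lborel)"
    by (rule nn_integral_cmult) simp
  also have "\<dots> \<le> ennreal K * ennreal (X * Y)"
    by (intro mult_left_mono holder[OF p S g h Lg Dh]) simp
  also have "\<dots> = ennreal (K * (X * Y))" using K by (simp add: ennreal_mult')
  finally show ?thesis .
qed

lemma cell_generic:
  fixes F g1 h1 g2 h2 :: "real \<Rightarrow> real"
  assumes p: "1 \<le> p" and d: "0 < d" "d \<le> b"
    and F[measurable]: "F \<in> borel_measurable borel" and Fnn: "\<And>s. 0 \<le> F s"
    and [measurable]: "g1 \<in> borel_measurable borel" "h1 \<in> borel_measurable borel"
      "g2 \<in> borel_measurable borel" "h2 \<in> borel_measurable borel"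
    and L1: "Lnorm_le p {0..d} g1 X1" and D1: "dual_norm_le p {0..d} h1 Y1"
    and L2: "Lnorm_le p {d..b} g2 X2" and D2: "dual_norm_le p {d..b} h2 Y2"
    and K: "0 \<le> K1" "0 \<le> K2" and Y: "0 \<le> Y1" "0 \<le> Y2"
    and le1: "\<And>s. 0 < s \<Longrightarrow> s \<le> d \<Longrightarrow> F s \<le> K1 * (\<bar>g1 s\<bar> * \<bar>h1 s\<bar>)"
    and le2: "\<And>s. d \<le> s \<Longrightarrow> s \<le> b \<Longrightarrow> F s \<le> K2 * (\<bar>g2 s\<bar> * \<bar>h2 s\<bar>)"
  shows "(\<integral>\<^sup>+s. ennreal (F s) * indicator {0..b} s \<partial>lborel) \<le> ennreal (K1 * (X1 * Y1) + K2 * (X2 * Y2))"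
proof -
  have X: "0 \<le> X1" "0 \<le> X2" using L1 L2 by (auto simp: Lnorm_le_def)
  have "(\<integral>\<^sup>+s. ennreal (F s) * indicator {0..b} s \<partial>lborel)
      \<le> (\<integral>\<^sup>+s. ennreal (F s) * indicator {0..d} s + ennreal (F s) * indicator {d..b} s \<partial>lborel)"
    by (intro nn_integral_mono) (auto simp: indicator_def)
  also have "\<dots> = (\<integral>\<^sup>+s. ennreal (F s) * indicator {0..d} s \<partial>lborel) + (\<integral>\<^sup>+s. ennreal (F s) * indicator {d..b} s \<partial>lborel)"
    by (rule nn_integral_add) auto
  also have "\<dots> \<le> ennreal (K1 * (X1 * Y1)) + ennreal (K2 * (X2 * Y2))"
  proof (intro add_mono)
    show "(\<integral>\<^sup>+s. ennreal (F s) * indicator {0..d} s \<partial>lborel) \<le> ennreal (K1 * (X1 * Y1))"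
    proof (rule holder2[OF p _ _ _ L1 D1 K(1)])
      show "AE s in lborel. s \<in> {0..d} \<longrightarrow> F s \<le> K1 * (\<bar>g1 s\<bar> * \<bar>h1 s\<bar>)"
        using AE_pt[of 0] by eventually_elim (auto intro: le1)
    qed auto
    show "(\<integral>\<^sup>+s. ennreal (F s) * indicator {d..b} s \<partial>lborel) \<le> ennreal (K2 * (X2 * Y2))"
      by (rule holder2[OF p _ _ _ L2 D2 K(2)]) (auto intro!: AE_I2 le2)
  qed
  also have "\<dots> = ennreal (K1 * (X1 * Y1) + K2 * (X2 * Y2))"
    using K X Y by (simp add: ennreal_plus[symmetric] del: ennreal_plus)
  finally show ?thesis .
qed



locale setting =
  fixes p \<beta> \<gamma> r :: real and \<omega> W :: "real \<Rightarrow> real" and N :: real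
  assumes p: "1 \<le> p" and \<beta>: "0 \<le> \<beta>" and \<gamma>: "0 < \<gamma>" "\<gamma> < \<beta> + 1/p" and r: "1 \<le> r"
    and w: "modulus_type \<omega>" and wpos: "\<And>t. 0 < t \<Longrightarrow> t \<le> 2*pi \<Longrightarrow> 0 < \<omega> t"
    and Wm[measurable]: "W \<in> borel_measurable borel" and WW: "\<And>t. 0 \<le> t \<Longrightarrow> t \<le> 2*pi \<Longrightarrow> W t = \<omega> t"
    and N: "1 \<le> N"
begin

definition "dl = pi / (r * N)"
definition "ee = \<gamma> - 1 - \<beta>"

lemma dl_pos: "0 < dl" using r N by (simp add: dl_def)
lemma dl_le: "dl \<le> pi / r"
  using r N by (simp add: dl_def field_simps mult_le_cancel_left1)
lemma pr_le: "pi / r \<le> pi" using r by (simp add: field_simps mult_le_cancel_left1)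
lemma ee: "ee + 1 - 1/p < 0" using \<gamma> by (simp add: ee_def)

lemma sinr_pos:
  assumes s: "0 < s" "s \<le> pi / r" shows "0 < sin (r * s / 2)"
proof -
  have "r * s \<le> pi" using r s by (simp add: field_simps)
  moreover have "0 < r * s" using r s by simp
  ultimately show ?thesis using pi_gt_zero by (intro sin_gt_zero) linarith+
qed

lemma sinr_lb: "0 \<le> s \<Longrightarrow> s \<le> pi / r \<Longrightarrow> r * s / pi \<le> sin (r * s / 2)"
  using sin_r_lb[of r s] r by simp

lemma far_h:
  assumes s: "dl \<le> s" "s \<le> pi / r" and ws: "0 \<le> ws" "ws \<le> K"
  shows "\<bar>ws * s powr \<gamma> / sin (r * s / 2) powr (1 + \<beta>)\<bar> \<le> (K * (pi / r) powr (1 + \<beta>)) * \<bar>s powr ee\<bar>"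
proof -
  have s0: "0 < s" using s dl_pos by auto
  have K: "0 \<le> K" using ws by simp
  have sp: "0 < sin (r * s / 2)" using sinr_pos s0 s by auto
  have lb: "r * s / pi \<le> sin (r * s / 2)" using sinr_lb s0 s by auto
  have rs: "0 < r * s / pi" using s0 r by simp
  have "1 / sin (r * s / 2) powr (1 + \<beta>) = (1 / sin (r * s / 2)) powr (1 + \<beta>)"
    using sp by (simp add: powr_divide)
  also have "\<dots> \<le> (1 / (r * s / pi)) powr (1 + \<beta>)"
    using sp lb rs \<beta> mult_pos_pos[OF sp rs] by (intro powr_mono2 divide_left_mono) auto
  also have "\<dots> = (pi / r) powr (1 + \<beta>) * s powr (- (1 + \<beta>))"
  proof -
    have e1: "1 / (r * s / pi) = (pi / r) * (1 / s)" by simp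
    have "((pi / r) * (1 / s)) powr (1 + \<beta>) = (pi / r) powr (1 + \<beta>) * (1 / s) powr (1 + \<beta>)"
      by (rule powr_mult)
    also have "(1 / s) powr (1 + \<beta>) = s powr (- (1 + \<beta>))"
      using s0 powr_minus_divide[of s "1 + \<beta>"] by (simp add: powr_divide)
    finally show ?thesis by (simp only: e1)
  qed
  finally have inv: "1 / sin (r * s / 2) powr (1 + \<beta>) \<le> (pi / r) powr (1 + \<beta>) * s powr (- (1 + \<beta>))" .
  have "\<bar>ws * s powr \<gamma> / sin (r * s / 2) powr (1 + \<beta>)\<bar> = ws * s powr \<gamma> * (1 / sin (r * s / 2) powr (1 + \<beta>))"
    using ws sp by simp
  also have "\<dots> \<le> K * s powr \<gamma> * ((pi / r) powr (1 + \<beta>) * s powr (- (1 + \<beta>)))"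
    using ws inv s0 sp by (intro mult_mono) auto
  also have "\<dots> = K * (pi / r) powr (1 + \<beta>) * (s powr \<gamma> * s powr (- (1 + \<beta>)))"
    using s0 by simp
  also have "s powr \<gamma> * s powr (- (1 + \<beta>)) = s powr ee"
  proof -
    have "\<gamma> + (- (1 + \<beta>)) = ee" by (simp add: ee_def)
    then show ?thesis by (simp only: powr_add[symmetric])
  qed
  finally show ?thesis using s0 by simp
qed

lemma cell0:
  fixes u kk :: "real \<Rightarrow> real"
  assumes um[measurable]: "u \<in> borel_measurable borel" and unn: "\<And>s. 0 \<le> u s"
    and km[measurable]: "kk \<in> borel_measurable borel" and B: "0 \<le> B"
    and kb1: "\<And>s. 0 < s \<Longrightarrow> s \<le> pi / r \<Longrightarrow> \<bar>kk s\<bar> \<le> 1 / (2 * sin (s / 2))"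
    and kb2: "\<And>s. 0 < s \<Longrightarrow> s \<le> pi / r \<Longrightarrow> \<bar>kk s\<bar> \<le> B / (4 * sin (s / 2) * sin (r * s / 2))"
    and H1: "dual_norm_le p {0..dl} (\<lambda>s. W s / (s * sin (r * s / 2) powr \<beta>)) Y1" and Y1: "0 \<le> Y1"
    and H2: "Lnorm_le p {0..dl} (\<lambda>s. u s / W s * sin (r * s / 2) powr \<beta>) X1"
    and H3: "Lnorm_le p {dl..pi/r} (\<lambda>s. u s * sin (r * s / 2) powr \<beta> / (W s * s powr \<gamma>)) X2"
  shows "(\<integral>\<^sup>+s. ennreal (u s * \<bar>kk s\<bar>) * indicator {0..pi/r} s \<partial>lborel)
    \<le> ennreal (pi / 2 * (X1 * Y1) + B * pi / 4 * (X2 * ((2 * \<omega> dl / dl * (pi / r) powr (1 + \<beta>)) * (kap p ee * dl powr (ee + 1 - 1/p)))))"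
proof (rule cell_generic[OF p dl_pos dl_le _ _ _ _ _ _ H2 H1 H3])
  define cf where "cf = 2 * \<omega> dl / dl"
  have cf: "0 \<le> cf" using mod_nonneg[OF w, of dl] dl_pos dl_le pr_le by (simp add: cf_def)
  show "dual_norm_le p {dl..pi / r} (\<lambda>s. W s * s powr \<gamma> / (s * sin (r * s / 2) powr (1 + \<beta>)))
      (cf * (pi / r) powr (1 + \<beta>) * (kap p ee * dl powr (ee + 1 - 1/p)))"
  proof (rule dual_norm_mono[OF p _ _ _ _ dual_norm_powr[OF p dl_pos dl_le ee]])
    show "0 \<le> cf * (pi / r) powr (1 + \<beta>)" using cf by simp
    fix s assume s: "s \<in> {dl..pi/r}"
    have s0: "0 < s" using s dl_pos by auto
    have "W s * dl \<le> 2 * \<omega> dl * s"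
      using mod_ratio[OF w dl_pos, of s] s WW[of s] s0 pr_le by auto
    then have ws: "W s / s \<le> cf"
      using s0 dl_pos by (simp add: cf_def field_simps)
    have "W s / s \<ge> 0" using WW[of s] wpos[of s] s0 s pr_le by auto
    then have "\<bar>(W s / s) * s powr \<gamma> / sin (r * s / 2) powr (1 + \<beta>)\<bar> \<le> (cf * (pi / r) powr (1 + \<beta>)) * \<bar>s powr ee\<bar>"
      using far_h[of s "W s / s" cf] s ws by auto
    then show "\<bar>W s * s powr \<gamma> / (s * sin (r * s / 2) powr (1 + \<beta>))\<bar> \<le> cf * (pi / r) powr (1 + \<beta>) * \<bar>s powr ee\<bar>"
      by (simp add: field_simps)
  qed auto
  show "0 \<le> cf * (pi / r) powr (1 + \<beta>) * (kap p ee * dl powr (ee + 1 - 1/p))"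
    using cf kap_nonneg by simp
  show "0 \<le> pi / 2" by simp
  show "0 \<le> B * pi / 4" using B by simp
  fix s
  show "0 \<le> u s * \<bar>kk s\<bar>" using unn by simp
  {
    assume s: "0 < s" "s \<le> dl"
    have spi: "s \<le> pi / r" using s dl_le by simp
    have sp: "0 < sin (r * s / 2)" using sinr_pos[OF s(1) spi] .
    have Ws: "0 < W s" using WW[of s] wpos[of s] s spi pr_le by auto
    have sh: "s / pi \<le> sin (s / 2)" using sin_half_lb[of s] s spi pr_le by auto
    have sh0: "0 < sin (s / 2)" using sh s by (smt (verit) divide_pos_pos pi_gt_zero)
    have "u s * \<bar>kk s\<bar> \<le> u s * (1 / (2 * sin (s / 2)))"
      using kb1[OF s(1) spi] unn by (intro mult_left_mono) auto
    also have "\<dots> \<le> u s * (pi / (2 * s))"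
    proof (intro mult_left_mono unn)
      have "0 < sin (s / 2) * (s / pi)" using sh0 s by simp
      then have "1 / (2 * sin (s / 2)) \<le> 1 / (2 * (s / pi))" using sh s by (intro divide_left_mono) auto
      then show "1 / (2 * sin (s / 2)) \<le> pi / (2 * s)" by simp
    qed
    also have "\<dots> = pi / 2 * (\<bar>u s / W s * sin (r * s / 2) powr \<beta>\<bar> * \<bar>W s / (s * sin (r * s / 2) powr \<beta>)\<bar>)"
    proof -
      define P where "P = sin (r * s / 2) powr \<beta>"
      define U where "U = u s"
      define V where "V = W s"
      have P: "0 < P" using sp by (simp add: P_def)
      have U: "0 \<le> U" using unn by (simp add: U_def)
      have V: "0 < V" using Ws by (simp add: V_def)
      have "U * (pi / (2 * s)) = pi / 2 * (\<bar>U / V * P\<bar> * \<bar>V / (s * P)\<bar>)"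
        using P U V s by (simp add: abs_mult field_simps)
      then show ?thesis by (simp add: P_def U_def V_def)
    qed
    finally show "u s * \<bar>kk s\<bar> \<le> pi / 2 * (\<bar>u s / W s * sin (r * s / 2) powr \<beta>\<bar> * \<bar>W s / (s * sin (r * s / 2) powr \<beta>)\<bar>)" .
  }
  {
    assume s: "dl \<le> s" "s \<le> pi / r"
    have s0: "0 < s" using s dl_pos by auto
    have sp: "0 < sin (r * s / 2)" using sinr_pos[OF s0 s(2)] .
    have Ws: "0 < W s" using WW[of s] wpos[of s] s0 s pr_le by auto
    have sh: "s / pi \<le> sin (s / 2)" using sin_half_lb[of s] s0 s pr_le by auto
    have "u s * \<bar>kk s\<bar> \<le> u s * (B / (4 * sin (s / 2) * sin (r * s / 2)))"
      using kb2[OF s0 s(2)] unn by (intro mult_left_mono) auto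
    also have "\<dots> \<le> u s * (B / (4 * (s / pi) * sin (r * s / 2)))"
    proof (intro mult_left_mono unn divide_left_mono B)
      show "4 * (s / pi) * sin (r * s / 2) \<le> 4 * sin (s / 2) * sin (r * s / 2)"
        using sh sp by (intro mult_right_mono) auto
      show "0 < 4 * sin (s / 2) * sin (r * s / 2) * (4 * (s / pi) * sin (r * s / 2))"
      proof -
        have "0 < s / pi" using s0 by simp
        then have "0 < sin (s / 2)" using sh by linarith
        then show ?thesis using sh sp s0 by (intro mult_pos_pos) auto
      qed
    qed
    also have "\<dots> = B * pi / 4 * (\<bar>u s * sin (r * s / 2) powr \<beta> / (W s * s powr \<gamma>)\<bar> *
        \<bar>W s * s powr \<gamma> / (s * sin (r * s / 2) powr (1 + \<beta>))\<bar>)"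
    proof -
      define P where "P = sin (r * s / 2) powr \<beta>"
      define S where "S = sin (r * s / 2)"
      define Q where "Q = s powr \<gamma>"
      define U where "U = u s"
      define V where "V = W s"
      have P: "0 < P" using sp by (simp add: P_def)
      have S: "0 < S" using sp by (simp add: S_def)
      have Q: "0 < Q" using s0 by (simp add: Q_def)
      have U: "0 \<le> U" using unn by (simp add: U_def)
      have V: "0 < V" using Ws by (simp add: V_def)
      have SP: "sin (r * s / 2) powr (1 + \<beta>) = S * P" using sp by (simp add: S_def P_def powr_add)
      have "U * (B / (4 * (s / pi) * S)) = B * pi / 4 * (\<bar>U * P / (V * Q)\<bar> * \<bar>V * Q / (s * (S * P))\<bar>)"
        using P S Q U V s0 by (simp add: abs_mult field_simps)
      then show ?thesis by (simp only: SP) (simp add: P_def U_def V_def Q_def S_def)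
    qed
    finally show "u s * \<bar>kk s\<bar> \<le> B * pi / 4 * (\<bar>u s * sin (r * s / 2) powr \<beta> / (W s * s powr \<gamma>)\<bar> *
        \<bar>W s * s powr \<gamma> / (s * sin (r * s / 2) powr (1 + \<beta>))\<bar>)" .
  }
qed (auto simp: Y1)

end


context setting begin

lemma cellJ:
  fixes u kk wf :: "real \<Rightarrow> real"
  assumes um[measurable]: "u \<in> borel_measurable borel" and unn: "\<And>s. 0 \<le> u s"
    and km[measurable]: "kk \<in> borel_measurable borel" and B: "0 \<le> B"
    and wm[measurable]: "wf \<in> borel_measurable borel"
    and wb: "\<And>s. 0 \<le> s \<Longrightarrow> s \<le> pi / r \<Longrightarrow> 0 < wf s \<and> wf s \<le> wmax"
    and s0: "0 < s0"
    and kb1: "\<And>s. 0 < s \<Longrightarrow> s \<le> pi / r \<Longrightarrow> \<bar>kk s\<bar> \<le> 1 / (2 * s0)"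
    and kb2: "\<And>s. 0 < s \<Longrightarrow> s \<le> pi / r \<Longrightarrow> \<bar>kk s\<bar> \<le> B / (4 * s0 * sin (r * s / 2))"
    and H1: "dual_norm_le p {0..dl} (\<lambda>s. W s / (s * sin (r * s / 2) powr \<beta>)) Y1" and Y1: "0 \<le> Y1"
    and H2: "Lnorm_le p {0..dl} (\<lambda>s. u s / wf s * sin (r * s / 2) powr \<beta>) X1"
    and H3: "Lnorm_le p {dl..pi/r} (\<lambda>s. u s * sin (r * s / 2) powr \<beta> / (wf s * s powr \<gamma>)) X2"
  shows "(\<integral>\<^sup>+s. ennreal (u s * \<bar>kk s\<bar>) * indicator {0..pi/r} s \<partial>lborel)
    \<le> ennreal (1 / (2 * s0) * (X1 * ((wmax * (2 * dl / \<omega> dl)) * Y1))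
       + B / (4 * s0) * (X2 * ((wmax * (pi / r) powr (1 + \<beta>)) * (kap p ee * dl powr (ee + 1 - 1/p)))))"
proof (rule cell_generic[OF p dl_pos dl_le _ _ _ _ _ _ H2 _ H3])
  have "0 \<le> pi / r" using r by simp
  then have "0 < wf 0 \<and> wf 0 \<le> wmax" using wb[of 0] by simp
  then have wmax: "0 \<le> wmax" by linarith
  have wdl: "0 < \<omega> dl" using wpos[of dl] dl_pos dl_le pr_le by auto
  show "dual_norm_le p {0..dl} (\<lambda>s. wf s / sin (r * s / 2) powr \<beta>) ((wmax * (2 * dl / \<omega> dl)) * Y1)"
  proof (rule dual_norm_mono[OF p _ _ _ _ H1])
    show "0 \<le> wmax * (2 * dl / \<omega> dl)" using wmax wdl dl_pos by simp
    fix s assume s: "s \<in> {0..dl}"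
    show "\<bar>wf s / sin (r * s / 2) powr \<beta>\<bar> \<le> wmax * (2 * dl / \<omega> dl) * \<bar>W s / (s * sin (r * s / 2) powr \<beta>)\<bar>"
    proof (cases "s = 0")
      case True then show ?thesis by simp
    next
      case False
      then have sp0: "0 < s" using s by auto
      have spi: "s \<le> pi / r" using s dl_le by auto
      have sp: "0 < sin (r * s / 2)" using sinr_pos[OF sp0 spi] .
      have Ws: "W s = \<omega> s" using WW[of s] sp0 spi pr_le by auto
      have ws: "0 < \<omega> s" using wpos[of s] sp0 spi pr_le by auto
      have rat: "\<omega> dl * s \<le> 2 * \<omega> s * dl"
        using mod_ratio[OF w sp0, of dl] s dl_le pr_le by auto
      define P where "P = sin (r * s / 2) powr \<beta>"
      define V where "V = wf s"
      have P: "0 < P" using sp by (simp add: P_def)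
      have V: "0 < V" "V \<le> wmax" using wb[of s] sp0 spi by (auto simp: V_def)
      have "\<bar>V / P\<bar> = V / P" using P V by simp
      also have "\<dots> \<le> wmax / P" using V P by (simp add: divide_right_mono)
      also have "\<dots> \<le> wmax * (2 * dl / \<omega> dl) * \<bar>\<omega> s / (s * P)\<bar>"
      proof -
        have "1 \<le> (2 * dl / \<omega> dl) * (\<omega> s / s)"
          using rat wdl sp0 by (simp add: field_simps)
        then have "wmax / P * 1 \<le> wmax / P * ((2 * dl / \<omega> dl) * (\<omega> s / s))"
          using wmax P by (intro mult_left_mono) auto
        then show ?thesis using P ws sp0 by (simp add: abs_mult field_simps)
      qed
      finally show ?thesis by (simp add: P_def V_def Ws)
    qed
  qed auto
  show "dual_norm_le p {dl..pi / r} (\<lambda>s. wf s * s powr \<gamma> / sin (r * s / 2) powr (1 + \<beta>))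
      ((wmax * (pi / r) powr (1 + \<beta>)) * (kap p ee * dl powr (ee + 1 - 1/p)))"
  proof (rule dual_norm_mono[OF p _ _ _ _ dual_norm_powr[OF p dl_pos dl_le ee]])
    show "0 \<le> wmax * (pi / r) powr (1 + \<beta>)" using wmax by simp
    fix s assume s: "s \<in> {dl..pi/r}"
    have "0 < wf s" "wf s \<le> wmax" using wb[of s] s dl_pos by auto
    then show "\<bar>wf s * s powr \<gamma> / sin (r * s / 2) powr (1 + \<beta>)\<bar> \<le> wmax * (pi / r) powr (1 + \<beta>) * \<bar>s powr ee\<bar>"
      using far_h[of s "wf s" wmax] s by auto
  qed auto
  show "0 \<le> (wmax * (pi / r) powr (1 + \<beta>)) * (kap p ee * dl powr (ee + 1 - 1/p))"
    using wmax kap_nonneg by simp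
  show "0 \<le> wmax * (2 * dl / \<omega> dl) * Y1" using wmax wdl dl_pos Y1 by simp
  show "0 \<le> 1 / (2 * s0)" using s0 by simp
  show "0 \<le> B / (4 * s0)" using B s0 by simp
  fix s
  show "0 \<le> u s * \<bar>kk s\<bar>" using unn by simp
  {
    assume s: "0 < s" "s \<le> dl"
    have spi: "s \<le> pi / r" using s dl_le by simp
    have sp: "0 < sin (r * s / 2)" using sinr_pos[OF s(1) spi] .
    have "u s * \<bar>kk s\<bar> \<le> u s * (1 / (2 * s0))"
      using kb1[OF s(1) spi] unn by (intro mult_left_mono) auto
    also have "\<dots> = 1 / (2 * s0) * (\<bar>u s / wf s * sin (r * s / 2) powr \<beta>\<bar> * \<bar>wf s / sin (r * s / 2) powr \<beta>\<bar>)"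
    proof -
      define P where "P = sin (r * s / 2) powr \<beta>"
      define U where "U = u s"
      define V where "V = wf s"
      have P: "0 < P" using sp by (simp add: P_def)
      have U: "0 \<le> U" using unn by (simp add: U_def)
      have V: "0 < V" using wb[of s] s spi by (simp add: V_def)
      have "U * (1 / (2 * s0)) = 1 / (2 * s0) * (\<bar>U / V * P\<bar> * \<bar>V / P\<bar>)"
        using P U V by (simp add: abs_mult field_simps)
      then show ?thesis by (simp add: P_def U_def V_def)
    qed
    finally show "u s * \<bar>kk s\<bar> \<le> 1 / (2 * s0) * (\<bar>u s / wf s * sin (r * s / 2) powr \<beta>\<bar> * \<bar>wf s / sin (r * s / 2) powr \<beta>\<bar>)" .
  }
  {
    assume s: "dl \<le> s" "s \<le> pi / r"
    have sp0: "0 < s" using s dl_pos by auto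
    have sp: "0 < sin (r * s / 2)" using sinr_pos[OF sp0 s(2)] .
    have "u s * \<bar>kk s\<bar> \<le> u s * (B / (4 * s0 * sin (r * s / 2)))"
      using kb2[OF sp0 s(2)] unn by (intro mult_left_mono) auto
    also have "\<dots> = B / (4 * s0) * (\<bar>u s * sin (r * s / 2) powr \<beta> / (wf s * s powr \<gamma>)\<bar> *
        \<bar>wf s * s powr \<gamma> / sin (r * s / 2) powr (1 + \<beta>)\<bar>)"
    proof -
      define P where "P = sin (r * s / 2) powr \<beta>"
      define S where "S = sin (r * s / 2)"
      define Q where "Q = s powr \<gamma>"
      define U where "U = u s"
      define V where "V = wf s"
      have P: "0 < P" using sp by (simp add: P_def)
      have S: "0 < S" using sp by (simp add: S_def)
      have Q: "0 < Q" using sp0 by (simp add: Q_def)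
      have U: "0 \<le> U" using unn by (simp add: U_def)
      have V: "0 < V" using wb[of s] sp0 s by (simp add: V_def)
      have SP: "sin (r * s / 2) powr (1 + \<beta>) = S * P" using sp by (simp add: S_def P_def powr_add)
      have "U * (B / (4 * s0 * S)) = B / (4 * s0) * (\<bar>U * P / (V * Q)\<bar> * \<bar>V * Q / (S * P)\<bar>)"
        using P S Q U V s0 by (simp add: abs_mult field_simps)
      then show ?thesis by (simp only: SP) (simp add: P_def U_def V_def Q_def S_def)
    qed
    finally show "u s * \<bar>kk s\<bar> \<le> B / (4 * s0) * (\<bar>u s * sin (r * s / 2) powr \<beta> / (wf s * s powr \<gamma>)\<bar> *
        \<bar>wf s * s powr \<gamma> / sin (r * s / 2) powr (1 + \<beta>)\<bar>)" .
  }
qed (auto simp: Y1)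

end


definition KK :: "(nat \<Rightarrow> real) \<Rightarrow> nat \<Rightarrow> real \<Rightarrow> real" where
  "KK a K t = (\<Sum>k\<le>K. a k * Dk k t)"

definition BK :: "(nat \<Rightarrow> real) \<Rightarrow> nat \<Rightarrow> nat \<Rightarrow> real" where
  "BK a K r = (\<Sum>k\<le>K. \<bar>a k - a (k + r)\<bar>) + (\<Sum>k<r. a k) + (\<Sum>k=K+1..K+r. a k)"

lemma KK_meas[measurable]: "KK a K \<in> borel_measurable borel"
  unfolding KK_def by measurable

lemma KK_b1:
  assumes nn: "\<And>k. 0 \<le> a k" and s1: "(\<Sum>k\<le>K. a k) \<le> 1" and t: "0 < t" "t < 2*pi"
  shows "\<bar>KK a K t\<bar> \<le> 1 / (2 * sin (t/2))"
proof -
  have s: "0 < sin (t/2)" using t by (intro sin_gt_zero) auto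
  have "\<bar>KK a K t\<bar> \<le> (\<Sum>k\<le>K. \<bar>a k * Dk k t\<bar>)" unfolding KK_def by (rule sum_abs)
  also have "\<dots> \<le> (\<Sum>k\<le>K. a k * (1 / (2 * sin (t/2))))"
  proof (intro sum_mono)
    fix k
    show "\<bar>a k * Dk k t\<bar> \<le> a k * (1 / (2 * sin (t/2)))"
      using mult_left_mono[OF Dk_bound1[OF t, of k] nn[of k]] nn[of k] by (simp add: abs_mult)
  qed
  also have "\<dots> = (\<Sum>k\<le>K. a k) * (1 / (2 * sin (t/2)))" by (simp add: sum_divide_distrib)
  also have "\<dots> \<le> 1 * (1 / (2 * sin (t/2)))" using s1 s by (intro mult_right_mono) auto
  finally show ?thesis by simp
qed

lemma KK_b2:
  assumes nn: "\<And>k. 0 \<le> a k" and s: "0 < sin (t/2)" and sr: "sin (real r * t / 2) \<noteq> 0"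
  shows "\<bar>KK a K t\<bar> \<le> BK a K r / (4 * sin (t/2) * \<bar>sin (real r * t / 2)\<bar>)"
proof -
  define c where "c k = cos ((real k + 1/2 - real r/2) * t)" for k
  have eqn: "4 * sin (t/2) * sin (real r * t / 2) * KK a K t = (\<Sum>k\<le>K. a k * (c k - c (k + r)))"
  proof -
    have e: "a k * (c k - c (k + r)) = 4 * sin (t/2) * sin (real r * t / 2) * (a k * Dk k t)" for k
      unfolding c_def Dk_cos[symmetric] by (simp add: algebra_simps)
    show ?thesis unfolding KK_def sum_distrib_left e ..
  qed
  then have "\<bar>4 * sin (t/2) * sin (real r * t / 2) * KK a K t\<bar> \<le> BK a K r"
  proof -
    have cb: "\<And>k. \<bar>c k\<bar> \<le> 1" by (simp add: c_def)
    show ?thesis unfolding BK_def eqn using sum_bound[where a=a and c=c and K=K and r=r, OF nn cb] by simp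
  qed
  then have "4 * sin (t/2) * \<bar>sin (real r * t / 2)\<bar> * \<bar>KK a K t\<bar> \<le> BK a K r"
    using s by (simp add: abs_mult)
  moreover have "0 < 4 * sin (t/2) * \<bar>sin (real r * t / 2)\<bar>" using s sr by simp
  ultimately show ?thesis by (simp add: field_simps mult.commute)
qed

lemma sin_shift_abs: "\<bar>sin (real j * pi + y)\<bar> = \<bar>sin y\<bar>" "\<bar>sin (real j * pi - y)\<bar> = \<bar>sin y\<bar>"
  by (simp_all add: sin_add sin_diff abs_mult)

lemma cell_sin:
  assumes r: "1 \<le> r" and s: "0 \<le> s" "s \<le> pi / r"
  shows "\<bar>sin (r * (2 * real j * pi / r + s) / 2)\<bar> = sin (r * s / 2)"
    and "\<bar>sin (r * (2 * real j * pi / r - s) / 2)\<bar> = sin (r * s / 2)"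
proof -
  have rs: "r * s \<le> pi" "0 \<le> r * s" using r s by (simp_all add: field_simps)
  have pos: "0 \<le> sin (r * s / 2)" using rs by (intro sin_ge_zero) auto
  have e1: "r * (2 * real j * pi / r + s) / 2 = real j * pi + r * s / 2" using r by (simp add: field_simps)
  have e2: "r * (2 * real j * pi / r - s) / 2 = real j * pi - r * s / 2" using r by (simp add: field_simps)
  have "\<bar>sin (real j * pi + r * s / 2)\<bar> = \<bar>sin (r * s / 2)\<bar>" by (rule sin_shift_abs(1))
  then show "\<bar>sin (r * (2 * real j * pi / r + s) / 2)\<bar> = sin (r * s / 2)"
    using pos by (simp only: e1)
  have "\<bar>sin (real j * pi - r * s / 2)\<bar> = \<bar>sin (r * s / 2)\<bar>" by (rule sin_shift_abs(2))
  then show "\<bar>sin (r * (2 * real j * pi / r - s) / 2)\<bar> = sin (r * s / 2)"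
    using pos by (simp only: e2)
qed

lemma nn_aff:
  fixes G :: "real \<Rightarrow> ennreal"
  assumes G[measurable]: "G \<in> borel_measurable borel" and sg: "\<bar>sg\<bar> = 1"
  shows "(\<integral>\<^sup>+t. G t \<partial>lborel) = (\<integral>\<^sup>+s. G (c + sg * s) \<partial>lborel)"
proof -
  have "sg \<noteq> 0" using sg by auto
  from nn_integral_real_affine[OF G this, of c] sg show ?thesis by simp
qed

lemma nn_shift:
  fixes G :: "real \<Rightarrow> ennreal"
  assumes G[measurable]: "G \<in> borel_measurable borel"
  shows "(\<integral>\<^sup>+t. G t * indicator {a..b} t \<partial>lborel) = (\<integral>\<^sup>+s. G (c + s) * indicator {a-c..b-c} s \<partial>lborel)"
proof -
  have "(\<integral>\<^sup>+t. G t * indicator {a..b} t \<partial>lborel) = (\<integral>\<^sup>+s. G (c + 1 * s) * indicator {a..b} (c + 1 * s) \<partial>lborel)"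
    by (rule nn_aff) auto
  also have "\<dots> = (\<integral>\<^sup>+s. G (c + s) * indicator {a-c..b-c} s \<partial>lborel)"
    by (intro nn_integral_cong) (auto simp: indicator_def)
  finally show ?thesis .
qed

lemma nn_refl:
  fixes G :: "real \<Rightarrow> ennreal"
  assumes G[measurable]: "G \<in> borel_measurable borel"
  shows "(\<integral>\<^sup>+t. G t * indicator {a..b} t \<partial>lborel) = (\<integral>\<^sup>+s. G (c - s) * indicator {c-b..c-a} s \<partial>lborel)"
proof -
  have "(\<integral>\<^sup>+t. G t * indicator {a..b} t \<partial>lborel) = (\<integral>\<^sup>+s. G (c + (-1) * s) * indicator {a..b} (c + (-1) * s) \<partial>lborel)"
    by (rule nn_aff) auto
  also have "\<dots> = (\<integral>\<^sup>+s. G (c - s) * indicator {c-b..c-a} s \<partial>lborel)"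
    by (intro nn_integral_cong) (auto simp: indicator_def)
  finally show ?thesis .
qed

lemma Lnorm_shift:
  assumes g[measurable]: "g \<in> borel_measurable borel" and L: "Lnorm_le p {a..b} g X"
  shows "Lnorm_le p {a-c..b-c} (\<lambda>s. g (c + s)) X"
  using L nn_shift[of "\<lambda>t. ennreal (\<bar>g t\<bar> powr p)" a b c] by (simp add: Lnorm_le_def)

lemma Lnorm_refl:
  assumes g[measurable]: "g \<in> borel_measurable borel" and L: "Lnorm_le p {a..b} g X"
  shows "Lnorm_le p {c-b..c-a} (\<lambda>s. g (c - s)) X"
  using L nn_refl[of "\<lambda>t. ennreal (\<bar>g t\<bar> powr p)" a b c] by (simp add: Lnorm_le_def)

definition Rcell :: "nat \<Rightarrow> nat \<Rightarrow> real set" where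
  "Rcell r m = {2 * real m * pi / r .. 2 * real m * pi / r + pi / r}"
definition Lcell :: "nat \<Rightarrow> nat \<Rightarrow> real set" where
  "Lcell r m = {2 * real (m + 1) * pi / r - pi / r .. 2 * real (m + 1) * pi / r}"
definition Lset :: "nat \<Rightarrow> nat set" where
  "Lset r = (if 2 \<le> r then {0..<r div 2} else {})"

lemma coverage:
  assumes r: "1 \<le> r" and t: "0 \<le> t" "t \<le> pi"
  shows "(\<exists>m\<in>M_set r. t \<in> Rcell r m) \<or> (\<exists>m\<in>Lset r. t \<in> Lcell r m)"
proof -
  define m where "m = nat \<lfloor>t * r / (2 * pi)\<rfloor>"
  have rp: "0 < real r" using r by simp
  have m1: "real m \<le> t * r / (2 * pi)" unfolding m_def using t rp
    by (simp add: of_nat_nat)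
  have m2: "t * r / (2 * pi) < real m + 1" unfolding m_def using t rp
    by (simp add: of_nat_nat)
  have lo: "2 * real m * pi / r \<le> t" using m1 rp by (simp add: field_simps)
  have hi: "t < 2 * real (m + 1) * pi / r" using m2 rp by (simp add: field_simps)
  have tr: "t * r \<le> pi * r" using t rp by (simp add: mult_right_mono)
  show ?thesis
  proof (cases "t \<le> 2 * real m * pi / r + pi / r")
    case tle: True
    have "2 * real m * pi \<le> t * r" using lo rp by (simp add: field_simps)
    then have "2 * real m * pi \<le> pi * r" using tr by linarith
    then have mr: "2 * m \<le> r" by (simp add: mult.commute)
    show ?thesis
    proof (cases "m \<in> M_set r")
      case True
      then show ?thesis using True lo tle by (auto simp: Rcell_def)
    next
      case False
      then have ev: "even r" and mr2: "m = r div 2" using mr by (auto simp: M_set_def split: if_splits)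
      then have r2: "2 \<le> r" using r by presburger
      have "real r = 2 * real m" using ev mr2 by (simp add: real_of_nat_div)
      then have "t = pi" using lo t rp by (simp add: field_simps)
      moreover have "r div 2 - 1 \<in> Lset r" using r2 by (auto simp: Lset_def)
      moreover have "pi \<in> Lcell r (r div 2 - 1)"
      proof -
        have "r div 2 - 1 + 1 = r div 2" using r2 by simp
        moreover have "2 * real (r div 2) = real r" using ev by (simp add: real_of_nat_div)
        ultimately have e: "2 * real (r div 2 - 1 + 1) * pi / real r = pi" using rp by simp
        have "pi / real r \<le> pi" using r by (simp add: field_simps mult_le_cancel_left1)
        then show ?thesis unfolding Lcell_def e using rp by simp
      qed
      ultimately show ?thesis by blast
    qed
  next
    case False
    have "(2 * real m + 1) * pi / r < t" using False by (simp add: field_simps add_divide_distrib)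
    then have "(2 * real m + 1) * pi < t * r" using rp by (simp add: field_simps)
    then have "(2 * real m + 1) * pi < pi * r" using tr by linarith
    then have "2 * real m + 1 < real r" by simp
    then have mr: "2 * m + 1 < r" by linarith
    then have "m \<in> Lset r" by (auto simp: Lset_def)
    moreover have "t \<in> Lcell r m"
    proof -
      have e: "2 * real (m + 1) * pi / r - pi / r = 2 * real m * pi / r + pi / r"
        by (simp add: field_simps add_divide_distrib)
      show ?thesis using False hi unfolding Lcell_def e by auto
    qed
    ultimately show ?thesis by blast
  qed
qed

lemma cover_int:
  fixes G :: "real \<Rightarrow> ennreal"
  assumes r: "1 \<le> r" and G[measurable]: "G \<in> borel_measurable borel"
  shows "(\<integral>\<^sup>+t. G t * indicator {0..pi} t \<partial>lborel)
    \<le> (\<Sum>m\<in>M_set r. \<integral>\<^sup>+t. G t * indicator (Rcell r m) t \<partial>lborel)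
      + (\<Sum>m\<in>Lset r. \<integral>\<^sup>+t. G t * indicator (Lcell r m) t \<partial>lborel)"
proof -
  have fin: "finite (M_set r)" "finite (Lset r)" by (auto simp: M_set_def Lset_def)
  have "(\<integral>\<^sup>+t. G t * indicator {0..pi} t \<partial>lborel)
      \<le> (\<integral>\<^sup>+t. (\<Sum>m\<in>M_set r. G t * indicator (Rcell r m) t) + (\<Sum>m\<in>Lset r. G t * indicator (Lcell r m) t) \<partial>lborel)"
  proof (intro nn_integral_mono)
    fix t
    show "G t * indicator {0..pi} t \<le> (\<Sum>m\<in>M_set r. G t * indicator (Rcell r m) t) + (\<Sum>m\<in>Lset r. G t * indicator (Lcell r m) t)"
    proof (cases "t \<in> {0..pi}")
      case True
      have cov: "(\<exists>m\<in>M_set r. t \<in> Rcell r m) \<or> (\<exists>m\<in>Lset r. t \<in> Lcell r m)"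
        using coverage[OF r, of t] True by auto
      from cov show ?thesis
      proof (elim disjE bexE)
        fix m assume m: "m \<in> M_set r" "t \<in> Rcell r m"
        have "G t * indicator {0..pi} t = G t * indicator (Rcell r m) t" using True m by simp
        also have "\<dots> \<le> (\<Sum>m\<in>M_set r. G t * indicator (Rcell r m) t)"
          by (rule member_le_sum[OF m(1)]) (auto simp: fin)
        also have "\<dots> \<le> (\<Sum>m\<in>M_set r. G t * indicator (Rcell r m) t) + (\<Sum>m\<in>Lset r. G t * indicator (Lcell r m) t)"
          by simp
        finally show ?thesis .
      next
        fix m assume m: "m \<in> Lset r" "t \<in> Lcell r m"
        have "G t * indicator {0..pi} t = G t * indicator (Lcell r m) t" using True m by simp
        also have "\<dots> \<le> (\<Sum>m\<in>Lset r. G t * indicator (Lcell r m) t)"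
          by (rule member_le_sum[OF m(1)]) (auto simp: fin)
        also have "\<dots> \<le> (\<Sum>m\<in>M_set r. G t * indicator (Rcell r m) t) + (\<Sum>m\<in>Lset r. G t * indicator (Lcell r m) t)"
          by simp
        finally show ?thesis .
      qed
    qed simp
  qed
  also have "\<dots> = (\<integral>\<^sup>+t. (\<Sum>m\<in>M_set r. G t * indicator (Rcell r m) t) \<partial>lborel) + (\<integral>\<^sup>+t. (\<Sum>m\<in>Lset r. G t * indicator (Lcell r m) t) \<partial>lborel)"
    by (rule nn_integral_add) (auto simp: Rcell_def Lcell_def)
  also have "\<dots> = (\<Sum>m\<in>M_set r. \<integral>\<^sup>+t. G t * indicator (Rcell r m) t \<partial>lborel)
      + (\<Sum>m\<in>Lset r. \<integral>\<^sup>+t. G t * indicator (Lcell r m) t \<partial>lborel)"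
    by (simp add: nn_integral_sum Rcell_def Lcell_def)
  finally show ?thesis .
qed



definition dlf :: "real \<Rightarrow> real \<Rightarrow> real" where "dlf r N = pi / (r * N)"

definition bnd0 :: "real \<Rightarrow> real \<Rightarrow> real \<Rightarrow> real \<Rightarrow> (real \<Rightarrow> real) \<Rightarrow> real \<Rightarrow> real \<Rightarrow> real \<Rightarrow> real \<Rightarrow> real \<Rightarrow> real" where
  "bnd0 p \<beta> \<gamma> r \<omega> N X1 Y1 X2 B = pi / 2 * (X1 * Y1) + B * pi / 4 * (X2 * ((2 * \<omega> (dlf r N) / dlf r N * (pi / r) powr (1 + \<beta>))
      * (kap p (\<gamma> - 1 - \<beta>) * dlf r N powr ((\<gamma> - 1 - \<beta>) + 1 - 1/p))))"

definition bndJ :: "real \<Rightarrow> real \<Rightarrow> real \<Rightarrow> real \<Rightarrow> (real \<Rightarrow> real) \<Rightarrow> real \<Rightarrow> real \<Rightarrow> real \<Rightarrow> real \<Rightarrow> real \<Rightarrow> real" where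
  "bndJ p \<beta> \<gamma> r \<omega> N X1 Y1 X2 B = 1 / (2 * sin (pi / (2 * r))) * (X1 * ((\<omega> pi * (2 * dlf r N / \<omega> (dlf r N))) * Y1))
     + B / (4 * sin (pi / (2 * r))) * (X2 * ((\<omega> pi * (pi / r) powr (1 + \<beta>)) * (kap p (\<gamma> - 1 - \<beta>) * dlf r N powr ((\<gamma> - 1 - \<beta>) + 1 - 1/p))))"

lemma BK_nonneg: "(\<And>k. 0 \<le> a k) \<Longrightarrow> 0 \<le> BK a K r"
  unfolding BK_def by (intro add_nonneg_nonneg sum_nonneg) auto

lemma phi_meas:
  assumes [measurable]: "f \<in> borel_measurable borel"
  shows "phi f x \<in> borel_measurable borel"
  unfolding phi_def[abs_def] by measurable

context setting begin

lemma dl_eq: "dl = dlf r N" by (simp add: dl_def dlf_def)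

lemma s0_pos: "0 < sin (pi / (2 * r))"
proof -
  have a: "pi / (2 * r) \<le> pi / 2" using r by (simp add: field_simps mult_le_cancel_left1)
  have b: "0 < pi / (2 * r)" using r by simp
  have c: "pi / (2 * r) < pi" using a pi_gt_zero by linarith
  show ?thesis using b c by (rule sin_gt_zero)
qed

lemma bnd_nonneg:
  assumes "0 \<le> X1" "0 \<le> Y1" "0 \<le> X2" "0 \<le> B"
  shows "0 \<le> bnd0 p \<beta> \<gamma> r \<omega> N X1 Y1 X2 B" "0 \<le> bndJ p \<beta> \<gamma> r \<omega> N X1 Y1 X2 B"
proof -
  have d: "0 < dlf r N" using dl_pos dl_eq by simp
  have dp: "dlf r N \<le> pi" using dl_le pr_le dl_eq by simp
  have wd: "0 \<le> \<omega> (dlf r N)" using mod_nonneg[OF w, of "dlf r N"] d dp by simp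
  have wp: "0 \<le> \<omega> pi" using mod_nonneg[OF w, of pi] by simp
  show "0 \<le> bnd0 p \<beta> \<gamma> r \<omega> N X1 Y1 X2 B" unfolding bnd0_def
    using assms d wd kap_nonneg by (intro add_nonneg_nonneg mult_nonneg_nonneg divide_nonneg_nonneg) auto
  show "0 \<le> bndJ p \<beta> \<gamma> r \<omega> N X1 Y1 X2 B" unfolding bndJ_def
    using assms d wd wp kap_nonneg s0_pos by (intro add_nonneg_nonneg mult_nonneg_nonneg divide_nonneg_nonneg) auto
qed

lemma KK_J:
  assumes nn: "\<And>k. 0 \<le> a k" and s1: "(\<Sum>k\<le>K. a k) \<le> 1"
    and t: "pi / r \<le> t" "t \<le> pi" and S: "\<bar>sin (r * t / 2)\<bar> = S" "0 < S" and rr: "r = real rn"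
  shows "\<bar>KK a K t\<bar> \<le> 1 / (2 * sin (pi / (2 * r)))" "\<bar>KK a K t\<bar> \<le> BK a K rn / (4 * sin (pi / (2 * r)) * S)"
proof -
  have t0: "0 < t" using t r by (smt (verit) divide_pos_pos pi_gt_zero)
  have mono: "sin (pi / (2 * r)) \<le> sin (t / 2)"
  proof (rule sin_monotone_2pi_le)
    show "- (pi / 2) \<le> pi / (2 * r)" using r by (smt (verit) divide_pos_pos pi_gt_zero)
    show "pi / (2 * r) \<le> t / 2" using t by simp
    show "t / 2 \<le> pi / 2" using t by simp
  qed
  have sp: "0 < sin (pi / (2 * r))" by (rule s0_pos)
  have t2: "t < 2 * pi" using t pi_gt_zero by linarith
  have "\<bar>KK a K t\<bar> \<le> 1 / (2 * sin (t / 2))" using KK_b1[OF nn s1 t0 t2] by simp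
  also have "\<dots> \<le> 1 / (2 * sin (pi / (2 * r)))" using mono sp by (intro divide_left_mono) auto
  finally show "\<bar>KK a K t\<bar> \<le> 1 / (2 * sin (pi / (2 * r)))" .
  have st: "0 < sin (t / 2)" using mono sp by simp
  have "\<bar>KK a K t\<bar> \<le> BK a K rn / (4 * sin (t / 2) * \<bar>sin (real rn * t / 2)\<bar>)"
    using S by (intro KK_b2[OF nn st]) (auto simp: rr)
  also have "\<dots> \<le> BK a K rn / (4 * sin (pi / (2 * r)) * S)"
    using S mono sp BK_nonneg[OF nn] rr by (intro divide_left_mono mult_right_mono mult_pos_pos) auto
  finally show "\<bar>KK a K t\<bar> \<le> BK a K rn / (4 * sin (pi / (2 * r)) * S)" .
qed

end



lemma right_cell:
  fixes r :: nat and f :: "real \<Rightarrow> real" and a :: "nat \<Rightarrow> real"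
  assumes S: "setting p \<beta> \<gamma> (real r) \<omega> W N"
    and fm[measurable]: "f \<in> borel_measurable borel" and nn: "\<And>k. 0 \<le> a k" and s1: "(\<Sum>k\<le>K. a k) \<le> 1"
    and m: "m \<in> M_set r"
    and H1: "dual_norm_le p {0..dlf r N} (\<lambda>t. \<omega> t / (t * sin (real r * t / 2) powr \<beta>)) Y1" and Y1: "0 \<le> Y1"
    and H2: "Lnorm_le p {2 * real m * pi / r .. 2 * real m * pi / r + dlf r N}
               (\<lambda>t. \<bar>phi f x t\<bar> / \<omega> t * \<bar>sin (real r * t / 2)\<bar> powr \<beta>) X1"
    and H3: "Lnorm_le p {2 * real m * pi / r + dlf r N .. 2 * real m * pi / r + pi / r}
               (\<lambda>t. \<bar>phi f x t\<bar> * \<bar>sin (real r * t / 2)\<bar> powr \<beta> / (\<omega> t * (t - 2 * real m * pi / r) powr \<gamma>)) X2"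
  shows "(\<integral>\<^sup>+t. ennreal \<bar>phi f x t * KK a K t\<bar> * indicator (Rcell r m) t \<partial>lborel)
    \<le> ennreal (bnd0 p \<beta> \<gamma> r \<omega> N X1 Y1 X2 (BK a K r) + bndJ p \<beta> \<gamma> r \<omega> N X1 Y1 X2 (BK a K r))"
proof -
  interpret S: setting p \<beta> \<gamma> "real r" \<omega> W N by (rule S)
  note Pm[measurable] = phi_meas[OF fm, of x]
  define c where "c = 2 * real m * pi / r"
  have rp: "0 < real r" using S.r by simp
  have c0: "0 \<le> c" using rp by (simp add: c_def)
  have "2 * m + 1 \<le> r" using m unfolding M_set_def by (auto split: if_splits) presburger+
  then have "2 * real m + 1 \<le> real r" by linarith
  then have "(2 * real m + 1) * pi / r \<le> real r * pi / r" using rp by (intro divide_right_mono mult_right_mono) auto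
  then have cpi: "c + pi / r \<le> pi" using rp by (simp add: c_def add_divide_distrib algebra_simps)
  have dlp: "0 < dlf r N" "dlf r N \<le> pi / r" using S.dl_pos S.dl_le S.dl_eq by auto
  have prp: "0 < pi / real r" using rp by simp
  have WW: "\<And>t. 0 \<le> t \<Longrightarrow> t \<le> pi \<Longrightarrow> W t = \<omega> t" using S.WW by simp
  have X: "0 \<le> X1" "0 \<le> X2" using H2 H3 by (auto simp: Lnorm_le_def)
  have B: "0 \<le> BK a K r" by (rule BK_nonneg[OF nn])
  note bn = S.bnd_nonneg[OF X(1) Y1 X(2) B]
  have I: "(\<integral>\<^sup>+t. ennreal \<bar>phi f x t * KK a K t\<bar> * indicator (Rcell r m) t \<partial>lborel)
      = (\<integral>\<^sup>+s. ennreal \<bar>phi f x (c + s) * KK a K (c + s)\<bar> * indicator {0..pi/r} s \<partial>lborel)"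
    using nn_shift[of "\<lambda>t. ennreal \<bar>phi f x t * KK a K t\<bar>" c "c + pi / r" c] by (simp add: Rcell_def c_def)
  have H1W: "dual_norm_le p {0..S.dl} (\<lambda>s. W s / (s * sin (real r * s / 2) powr \<beta>)) Y1"
    using H1 unfolding S.dl_eq
    by (subst dual_norm_cong[where g'="\<lambda>t. \<omega> t / (t * sin (real r * t / 2) powr \<beta>)"])
       (use dlp cpi c0 in \<open>auto intro!: WW\<close>)
  have H2W: "Lnorm_le p {c .. c + dlf r N} (\<lambda>t. \<bar>phi f x t\<bar> / W t * \<bar>sin (real r * t / 2)\<bar> powr \<beta>) X1"
    using H2 unfolding c_def[symmetric]
    by (subst Lnorm_cong[where g'="\<lambda>t. \<bar>phi f x t\<bar> / \<omega> t * \<bar>sin (real r * t / 2)\<bar> powr \<beta>"])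
       (use dlp cpi c0 in \<open>auto simp: WW\<close>)
  have H3W: "Lnorm_le p {c + dlf r N .. c + pi / r} (\<lambda>t. \<bar>phi f x t\<bar> * \<bar>sin (real r * t / 2)\<bar> powr \<beta> / (W t * (t - c) powr \<gamma>)) X2"
    using H3 unfolding c_def[symmetric]
    by (subst Lnorm_cong[where g'="\<lambda>t. \<bar>phi f x t\<bar> * \<bar>sin (real r * t / 2)\<bar> powr \<beta> / (\<omega> t * (t - c) powr \<gamma>)"])
       (use dlp cpi c0 in \<open>auto simp: WW\<close>)
  have H2s: "Lnorm_le p {0..S.dl} (\<lambda>s. \<bar>phi f x (c + s)\<bar> / W (c + s) * sin (real r * s / 2) powr \<beta>) X1"
  proof -
    have "Lnorm_le p {c - c .. c + dlf r N - c} (\<lambda>s. \<bar>phi f x (c + s)\<bar> / W (c + s) * \<bar>sin (real r * (c + s) / 2)\<bar> powr \<beta>) X1"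
      by (rule Lnorm_shift[OF _ H2W]) measurable
    then have "Lnorm_le p {0 .. dlf r N} (\<lambda>s. \<bar>phi f x (c + s)\<bar> / W (c + s) * \<bar>sin (real r * (c + s) / 2)\<bar> powr \<beta>) X1"
      by simp
    then show ?thesis unfolding S.dl_eq
      by (subst Lnorm_cong[where g'="\<lambda>s. \<bar>phi f x (c + s)\<bar> / W (c + s) * \<bar>sin (real r * (c + s) / 2)\<bar> powr \<beta>"])
         (use dlp S.r in \<open>auto simp: c_def cell_sin\<close>)
  qed
  have H3s: "Lnorm_le p {S.dl..pi / r} (\<lambda>s. \<bar>phi f x (c + s)\<bar> * sin (real r * s / 2) powr \<beta> / (W (c + s) * s powr \<gamma>)) X2"
  proof -
    have "Lnorm_le p {c + dlf r N - c .. c + pi / r - c} (\<lambda>s. \<bar>phi f x (c + s)\<bar> * \<bar>sin (real r * (c + s) / 2)\<bar> powr \<beta> / (W (c + s) * (c + s - c) powr \<gamma>)) X2"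
      by (rule Lnorm_shift[OF _ H3W]) measurable
    then have "Lnorm_le p {dlf r N .. pi / r} (\<lambda>s. \<bar>phi f x (c + s)\<bar> * \<bar>sin (real r * (c + s) / 2)\<bar> powr \<beta> / (W (c + s) * s powr \<gamma>)) X2"
      by simp
    then show ?thesis unfolding S.dl_eq
      by (subst Lnorm_cong[where g'="\<lambda>s. \<bar>phi f x (c + s)\<bar> * \<bar>sin (real r * (c + s) / 2)\<bar> powr \<beta> / (W (c + s) * s powr \<gamma>)"])
         (use dlp S.r in \<open>auto simp: c_def cell_sin\<close>)
  qed
  show ?thesis
  proof (cases "m = 0")
    case True
    then have c00: "c = 0" by (simp add: c_def)
    have "(\<integral>\<^sup>+s. ennreal (\<bar>phi f x s\<bar> * \<bar>KK a K s\<bar>) * indicator {0..pi/r} s \<partial>lborel)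
        \<le> ennreal (pi / 2 * (X1 * Y1) + BK a K r * pi / 4 * (X2 * ((2 * \<omega> S.dl / S.dl * (pi / r) powr (1 + \<beta>)) * (kap p S.ee * S.dl powr (S.ee + 1 - 1/p)))))"
    proof (rule S.cell0[OF _ _ _ B _ _ H1W Y1])
      show "Lnorm_le p {0..S.dl} (\<lambda>s. \<bar>phi f x s\<bar> / W s * sin (real r * s / 2) powr \<beta>) X1"
        using H2s by (simp add: c00)
      show "Lnorm_le p {S.dl..pi / r} (\<lambda>s. \<bar>phi f x s\<bar> * sin (real r * s / 2) powr \<beta> / (W s * s powr \<gamma>)) X2"
        using H3s by (simp add: c00)
      fix s assume s: "0 < s" "s \<le> pi / r"
      have s2: "s < 2 * pi" using s S.pr_le pi_gt_zero by linarith
      show "\<bar>KK a K s\<bar> \<le> 1 / (2 * sin (s / 2))" by (rule KK_b1[OF nn s1 s(1) s2])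
      have sh: "0 < sin (s / 2)" using s s2 by (intro sin_gt_zero) auto
      have sr: "0 < sin (real r * s / 2)" using S.sinr_pos[OF s] .
      show "\<bar>KK a K s\<bar> \<le> BK a K r / (4 * sin (s / 2) * sin (real r * s / 2))"
        using KK_b2[where r=r and K=K, OF nn sh] sr by simp
    qed auto
    then have "(\<integral>\<^sup>+s. ennreal \<bar>phi f x (c + s) * KK a K (c + s)\<bar> * indicator {0..pi/r} s \<partial>lborel)
        \<le> ennreal (bnd0 p \<beta> \<gamma> r \<omega> N X1 Y1 X2 (BK a K r))"
      by (simp add: c00 abs_mult bnd0_def S.dl_eq S.ee_def)
    also have "\<dots> \<le> ennreal (bnd0 p \<beta> \<gamma> r \<omega> N X1 Y1 X2 (BK a K r) + bndJ p \<beta> \<gamma> r \<omega> N X1 Y1 X2 (BK a K r))"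
      using bn by (intro ennreal_leI) simp
    finally show ?thesis using I by simp
  next
    case False
    then have m1: "1 \<le> real m" by simp
    have cge: "2 * pi / r \<le> c" using m1 rp by (simp add: c_def field_simps)
    have "(\<integral>\<^sup>+s. ennreal (\<bar>phi f x (c + s)\<bar> * \<bar>KK a K (c + s)\<bar>) * indicator {0..pi/r} s \<partial>lborel)
        \<le> ennreal (1 / (2 * sin (pi / (2 * real r))) * (X1 * ((\<omega> pi * (2 * S.dl / \<omega> S.dl)) * Y1))
       + BK a K r / (4 * sin (pi / (2 * real r))) * (X2 * ((\<omega> pi * (pi / r) powr (1 + \<beta>)) * (kap p S.ee * S.dl powr (S.ee + 1 - 1/p)))))"
    proof (rule S.cellJ[OF _ _ _ B _ _ S.s0_pos _ _ H1W Y1 H2s H3s])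
      fix s assume s: "0 \<le> s" "s \<le> pi / r"
      have t: "pi / r \<le> c + s" "c + s \<le> pi" using s cge cpi prp by auto
      have t0: "0 < c + s" using t prp by linarith
      show "0 < W (c + s) \<and> W (c + s) \<le> \<omega> pi"
        using WW[of "c + s"] t t0 S.wpos[of "c + s"] mod_mono[OF S.w, of "c + s" pi] by auto
    next
      fix s assume s: "0 < s" "s \<le> pi / r"
      have t: "pi / r \<le> c + s" "c + s \<le> pi" using s cge cpi prp by auto
      have sr: "0 < sin (real r * s / 2)" using S.sinr_pos[OF s] .
      have cs: "\<bar>sin (real r * (c + s) / 2)\<bar> = sin (real r * s / 2)"
        unfolding c_def using s S.r by (intro cell_sin(1)) auto
      note KJ = S.KK_J[OF nn s1 t cs sr, of r]
      show "\<bar>KK a K (c + s)\<bar> \<le> 1 / (2 * sin (pi / (2 * real r)))" using KJ by simp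
      show "\<bar>KK a K (c + s)\<bar> \<le> BK a K r / (4 * sin (pi / (2 * real r)) * sin (real r * s / 2))" using KJ by simp
    qed auto
    then have "(\<integral>\<^sup>+s. ennreal \<bar>phi f x (c + s) * KK a K (c + s)\<bar> * indicator {0..pi/r} s \<partial>lborel)
        \<le> ennreal (bndJ p \<beta> \<gamma> r \<omega> N X1 Y1 X2 (BK a K r))"
      by (simp add: abs_mult bndJ_def S.dl_eq S.ee_def)
    also have "\<dots> \<le> ennreal (bnd0 p \<beta> \<gamma> r \<omega> N X1 Y1 X2 (BK a K r) + bndJ p \<beta> \<gamma> r \<omega> N X1 Y1 X2 (BK a K r))"
      using bn by (intro ennreal_leI) simp
    finally show ?thesis using I by simp
  qed
qed



lemma left_cell:
  fixes r :: nat and f :: "real \<Rightarrow> real" and a :: "nat \<Rightarrow> real"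
  assumes S: "setting p \<beta> \<gamma> (real r) \<omega> W N"
    and fm[measurable]: "f \<in> borel_measurable borel" and nn: "\<And>k. 0 \<le> a k" and s1: "(\<Sum>k\<le>K. a k) \<le> 1"
    and m: "m \<in> Lset r"
    and H1: "dual_norm_le p {0..dlf r N} (\<lambda>t. \<omega> t / (t * sin (real r * t / 2) powr \<beta>)) Y1" and Y1: "0 \<le> Y1"
    and H2: "Lnorm_le p {2 * real (m + 1) * pi / r - dlf r N .. 2 * real (m + 1) * pi / r}
               (\<lambda>t. \<bar>phi f x t\<bar> / \<omega> t * \<bar>sin (real r * t / 2)\<bar> powr \<beta>) X1"
    and H3: "Lnorm_le p {2 * real (m + 1) * pi / r - pi / r .. 2 * real (m + 1) * pi / r - dlf r N}
               (\<lambda>t. \<bar>phi f x t\<bar> * \<bar>sin (real r * t / 2)\<bar> powr \<beta> / (\<omega> t * (2 * real (m + 1) * pi / r - t) powr \<gamma>)) X2"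
  shows "(\<integral>\<^sup>+t. ennreal \<bar>phi f x t * KK a K t\<bar> * indicator (Lcell r m) t \<partial>lborel)
    \<le> ennreal (bnd0 p \<beta> \<gamma> r \<omega> N X1 Y1 X2 (BK a K r) + bndJ p \<beta> \<gamma> r \<omega> N X1 Y1 X2 (BK a K r))"
proof -
  interpret S: setting p \<beta> \<gamma> "real r" \<omega> W N by (rule S)
  note Pm[measurable] = phi_meas[OF fm, of x]
  define c where "c = 2 * real (m + 1) * pi / r"
  have rp: "0 < real r" using S.r by simp
  have "2 * (m + 1) \<le> r" using m unfolding Lset_def by (auto split: if_splits)
  then have "2 * real (m + 1) \<le> real r" by linarith
  then have "2 * real (m + 1) * pi / r \<le> real r * pi / r" using rp by (intro divide_right_mono mult_right_mono) auto
  then have cpi: "c \<le> pi" using rp by (simp add: c_def)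
  have cge: "2 * pi / r \<le> c" using rp by (simp add: c_def field_simps)
  have dlp: "0 < dlf r N" "dlf r N \<le> pi / r" using S.dl_pos S.dl_le S.dl_eq by auto
  have prp: "0 < pi / real r" using rp by simp
  have cl: "pi / r \<le> c - pi / r" using cge by (simp add: field_simps)
  have WW: "\<And>t. 0 \<le> t \<Longrightarrow> t \<le> pi \<Longrightarrow> W t = \<omega> t" using S.WW by simp
  have X: "0 \<le> X1" "0 \<le> X2" using H2 H3 by (auto simp: Lnorm_le_def)
  have B: "0 \<le> BK a K r" by (rule BK_nonneg[OF nn])
  note bn = S.bnd_nonneg[OF X(1) Y1 X(2) B]
  have I: "(\<integral>\<^sup>+t. ennreal \<bar>phi f x t * KK a K t\<bar> * indicator (Lcell r m) t \<partial>lborel)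
      = (\<integral>\<^sup>+s. ennreal \<bar>phi f x (c - s) * KK a K (c - s)\<bar> * indicator {0..pi/r} s \<partial>lborel)"
    using nn_refl[of "\<lambda>t. ennreal \<bar>phi f x t * KK a K t\<bar>" "c - pi / r" c c] by (simp add: Lcell_def c_def)
  have H1W: "dual_norm_le p {0..S.dl} (\<lambda>s. W s / (s * sin (real r * s / 2) powr \<beta>)) Y1"
    using H1 unfolding S.dl_eq
    by (subst dual_norm_cong[where g'="\<lambda>t. \<omega> t / (t * sin (real r * t / 2) powr \<beta>)"])
       (use dlp S.pr_le in \<open>auto intro!: WW\<close>)
  have H2W: "Lnorm_le p {c - dlf r N .. c} (\<lambda>t. \<bar>phi f x t\<bar> / W t * \<bar>sin (real r * t / 2)\<bar> powr \<beta>) X1"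
    using H2 unfolding c_def[symmetric]
    by (subst Lnorm_cong[where g'="\<lambda>t. \<bar>phi f x t\<bar> / \<omega> t * \<bar>sin (real r * t / 2)\<bar> powr \<beta>"])
       (use dlp cpi cl prp in \<open>auto simp: WW\<close>)
  have H3W: "Lnorm_le p {c - pi / r .. c - dlf r N} (\<lambda>t. \<bar>phi f x t\<bar> * \<bar>sin (real r * t / 2)\<bar> powr \<beta> / (W t * (c - t) powr \<gamma>)) X2"
    using H3 unfolding c_def[symmetric]
    by (subst Lnorm_cong[where g'="\<lambda>t. \<bar>phi f x t\<bar> * \<bar>sin (real r * t / 2)\<bar> powr \<beta> / (\<omega> t * (c - t) powr \<gamma>)"])
       (use dlp cpi cl prp in \<open>auto simp: WW\<close>)
  have csg: "\<bar>sin (real r * (c - s) / 2)\<bar> = sin (real r * s / 2)" if "0 \<le> s" "s \<le> pi / r" for s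
    unfolding c_def using that S.r by (intro cell_sin(2)) auto
  have H2s: "Lnorm_le p {0..S.dl} (\<lambda>s. \<bar>phi f x (c - s)\<bar> / W (c - s) * sin (real r * s / 2) powr \<beta>) X1"
  proof -
    have "Lnorm_le p {c - c .. c - (c - dlf r N)} (\<lambda>s. \<bar>phi f x (c - s)\<bar> / W (c - s) * \<bar>sin (real r * (c - s) / 2)\<bar> powr \<beta>) X1"
      by (rule Lnorm_refl[OF _ H2W]) measurable
    then have "Lnorm_le p {0 .. dlf r N} (\<lambda>s. \<bar>phi f x (c - s)\<bar> / W (c - s) * \<bar>sin (real r * (c - s) / 2)\<bar> powr \<beta>) X1"
      by simp
    then show ?thesis unfolding S.dl_eq
      by (subst Lnorm_cong[where g'="\<lambda>s. \<bar>phi f x (c - s)\<bar> / W (c - s) * \<bar>sin (real r * (c - s) / 2)\<bar> powr \<beta>"])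
         (use dlp S.r in \<open>auto simp: csg\<close>)
  qed
  have H3s: "Lnorm_le p {S.dl..pi / r} (\<lambda>s. \<bar>phi f x (c - s)\<bar> * sin (real r * s / 2) powr \<beta> / (W (c - s) * s powr \<gamma>)) X2"
  proof -
    have "Lnorm_le p {c - (c - dlf r N) .. c - (c - pi / r)} (\<lambda>s. \<bar>phi f x (c - s)\<bar> * \<bar>sin (real r * (c - s) / 2)\<bar> powr \<beta> / (W (c - s) * (c - (c - s)) powr \<gamma>)) X2"
      by (rule Lnorm_refl[OF _ H3W]) measurable
    then have "Lnorm_le p {dlf r N .. pi / r} (\<lambda>s. \<bar>phi f x (c - s)\<bar> * \<bar>sin (real r * (c - s) / 2)\<bar> powr \<beta> / (W (c - s) * s powr \<gamma>)) X2"
      by simp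
    then show ?thesis unfolding S.dl_eq
      by (subst Lnorm_cong[where g'="\<lambda>s. \<bar>phi f x (c - s)\<bar> * \<bar>sin (real r * (c - s) / 2)\<bar> powr \<beta> / (W (c - s) * s powr \<gamma>)"])
         (use dlp S.r in \<open>auto simp: csg\<close>)
  qed
  have "(\<integral>\<^sup>+s. ennreal (\<bar>phi f x (c - s)\<bar> * \<bar>KK a K (c - s)\<bar>) * indicator {0..pi/r} s \<partial>lborel)
      \<le> ennreal (1 / (2 * sin (pi / (2 * real r))) * (X1 * ((\<omega> pi * (2 * S.dl / \<omega> S.dl)) * Y1))
     + BK a K r / (4 * sin (pi / (2 * real r))) * (X2 * ((\<omega> pi * (pi / r) powr (1 + \<beta>)) * (kap p S.ee * S.dl powr (S.ee + 1 - 1/p)))))"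
  proof (rule S.cellJ[OF _ _ _ B _ _ S.s0_pos _ _ H1W Y1 H2s H3s])
    fix s assume s: "0 \<le> s" "s \<le> pi / r"
    have t: "pi / r \<le> c - s" "c - s \<le> pi" using s cl cpi prp by auto
    have t0: "0 < c - s" using t prp by linarith
    show "0 < W (c - s) \<and> W (c - s) \<le> \<omega> pi"
      using WW[of "c - s"] t t0 S.wpos[of "c - s"] mod_mono[OF S.w, of "c - s" pi] by auto
  next
    fix s assume s: "0 < s" "s \<le> pi / r"
    have t: "pi / r \<le> c - s" "c - s \<le> pi" using s cl cpi prp by auto
    have sr: "0 < sin (real r * s / 2)" using S.sinr_pos[OF s] .
    have cs: "\<bar>sin (real r * (c - s) / 2)\<bar> = sin (real r * s / 2)"
      unfolding c_def using s S.r by (intro cell_sin(2)) auto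
    note KJ = S.KK_J[OF nn s1 t cs sr, of r]
    show "\<bar>KK a K (c - s)\<bar> \<le> 1 / (2 * sin (pi / (2 * real r)))" using KJ by simp
    show "\<bar>KK a K (c - s)\<bar> \<le> BK a K r / (4 * sin (pi / (2 * real r)) * sin (real r * s / 2))" using KJ by simp
  qed auto
  then have "(\<integral>\<^sup>+s. ennreal \<bar>phi f x (c - s) * KK a K (c - s)\<bar> * indicator {0..pi/r} s \<partial>lborel)
      \<le> ennreal (bndJ p \<beta> \<gamma> r \<omega> N X1 Y1 X2 (BK a K r))"
    by (simp add: abs_mult bndJ_def S.dl_eq S.ee_def)
  also have "\<dots> \<le> ennreal (bnd0 p \<beta> \<gamma> r \<omega> N X1 Y1 X2 (BK a K r) + bndJ p \<beta> \<gamma> r \<omega> N X1 Y1 X2 (BK a K r))"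
    using bn by (intro ennreal_leI) simp
  finally show ?thesis using I by simp
qed



lemma abs_int_le:
  fixes g :: "real \<Rightarrow> real"
  assumes gi: "set_integrable lborel S g"
  shows "ennreal \<bar>LBINT t:S. g t\<bar> \<le> (\<integral>\<^sup>+t. ennreal \<bar>g t\<bar> * indicator S t \<partial>lborel)"
proof -
  have i: "integrable lborel (\<lambda>t. indicator S t *\<^sub>R g t)" using gi by (simp add: set_integrable_def)
  have i2: "integrable lborel (\<lambda>t. norm (indicator S t *\<^sub>R g t))" using i by (rule integrable_norm)
  have "\<bar>LBINT t:S. g t\<bar> \<le> (\<integral>t. norm (indicator S t *\<^sub>R g t) \<partial>lborel)"
    unfolding set_lebesgue_integral_def using integral_norm_bound[of lborel "\<lambda>t. indicator S t *\<^sub>R g t"] by simp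
  then have "ennreal \<bar>LBINT t:S. g t\<bar> \<le> ennreal (\<integral>t. norm (indicator S t *\<^sub>R g t) \<partial>lborel)"
    by (rule ennreal_leI)
  also have "\<dots> = (\<integral>\<^sup>+t. ennreal (norm (indicator S t *\<^sub>R g t)) \<partial>lborel)"
    by (rule nn_integral_eq_integral[OF i2, symmetric]) simp
  also have "\<dots> = (\<integral>\<^sup>+t. ennreal \<bar>g t\<bar> * indicator S t \<partial>lborel)"
    by (intro nn_integral_cong) (auto simp: indicator_def)
  finally show ?thesis .
qed

lemma rep_sum:
  fixes f :: "real \<Rightarrow> real"
  assumes fm[measurable]: "f \<in> borel_measurable borel" and per: "\<And>u. f (u + 2*pi) = f u"
    and fi: "set_integrable lborel {-pi..pi} f"
  shows "set_integrable lborel {0..pi} (\<lambda>t. phi f x t * KK a K t) \<and>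
    (\<Sum>k\<le>K. a k * (fourier_partial_sum f k x - f x)) = (LBINT t:{0..pi}. phi f x t * KK a K t) / pi"
proof (induction K)
  case 0
  note R = rep[OF fm per fi, where x=x and k=0]
  have e: "(\<lambda>t. phi f x t * KK a 0 t) = (\<lambda>t. phi f x t * Dk 0 t * a 0)" by (auto simp: KK_def)
  show ?case unfolding e using R by (simp add: set_integrable_mult_left)
next
  case (Suc K)
  note R = rep[OF fm per fi, where x=x and k="Suc K"]
  have e: "(\<lambda>t. phi f x t * KK a (Suc K) t) = (\<lambda>t. phi f x t * KK a K t + phi f x t * Dk (Suc K) t * a (Suc K))"
    by (auto simp: KK_def algebra_simps)
  have i2: "set_integrable lborel {0..pi} (\<lambda>t. phi f x t * Dk (Suc K) t * a (Suc K))"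
    using R(1) by (simp add: set_integrable_mult_left)
  have I: "set_integrable lborel {0..pi} (\<lambda>t. phi f x t * KK a (Suc K) t)"
    unfolding e using Suc.IH i2 by (intro set_integral_add) auto
  have "(\<Sum>k\<le>Suc K. a k * (fourier_partial_sum f k x - f x))
      = (LBINT t:{0..pi}. phi f x t * KK a K t) / pi + a (Suc K) * ((LBINT t:{0..pi}. phi f x t * Dk (Suc K) t) / pi)"
    using Suc.IH R(2) by simp
  also have "\<dots> = ((LBINT t:{0..pi}. phi f x t * KK a K t) + (LBINT t:{0..pi}. phi f x t * Dk (Suc K) t * a (Suc K))) / pi"
    by (simp add: field_simps)
  also have "(LBINT t:{0..pi}. phi f x t * KK a K t) + (LBINT t:{0..pi}. phi f x t * Dk (Suc K) t * a (Suc K))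
      = (LBINT t:{0..pi}. phi f x t * KK a (Suc K) t)"
    unfolding e using Suc.IH i2 by (intro set_integral_add(2)[symmetric]) auto
  finally show ?case using I by simp
qed

lemma card_cells: "card (M_set r) + card (Lset r) \<le> r + 1"
proof -
  have "card (M_set r) \<le> r div 2 + 1" by (auto simp: M_set_def)
  moreover have "card (Lset r) \<le> r div 2" by (auto simp: Lset_def)
  ultimately show ?thesis by linarith
qed

lemma Kbound:
  fixes r :: nat and f :: "real \<Rightarrow> real" and a :: "nat \<Rightarrow> real"
  assumes S: "setting p \<beta> \<gamma> (real r) \<omega> W N"
    and fm[measurable]: "f \<in> borel_measurable borel" and per: "\<And>u. f (u + 2*pi) = f u"
    and fi: "set_integrable lborel {-pi..pi} f"
    and nn: "\<And>k. 0 \<le> a k" and s1: "(\<Sum>k\<le>K. a k) \<le> 1"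
    and H1: "dual_norm_le p {0..dlf r N} (\<lambda>t. \<omega> t / (t * sin (real r * t / 2) powr \<beta>)) Y1" and Y1: "0 \<le> Y1"
    and X: "0 \<le> X1" "0 \<le> X2"
    and HR: "\<And>m. m \<in> M_set r \<Longrightarrow>
       Lnorm_le p {2 * real m * pi / r .. 2 * real m * pi / r + dlf r N}
               (\<lambda>t. \<bar>phi f x t\<bar> / \<omega> t * \<bar>sin (real r * t / 2)\<bar> powr \<beta>) X1 \<and>
       Lnorm_le p {2 * real m * pi / r + dlf r N .. 2 * real m * pi / r + pi / r}
               (\<lambda>t. \<bar>phi f x t\<bar> * \<bar>sin (real r * t / 2)\<bar> powr \<beta> / (\<omega> t * (t - 2 * real m * pi / r) powr \<gamma>)) X2"
    and HL: "\<And>m. m \<in> Lset r \<Longrightarrow>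
       Lnorm_le p {2 * real (m + 1) * pi / r - dlf r N .. 2 * real (m + 1) * pi / r}
               (\<lambda>t. \<bar>phi f x t\<bar> / \<omega> t * \<bar>sin (real r * t / 2)\<bar> powr \<beta>) X1 \<and>
       Lnorm_le p {2 * real (m + 1) * pi / r - pi / r .. 2 * real (m + 1) * pi / r - dlf r N}
               (\<lambda>t. \<bar>phi f x t\<bar> * \<bar>sin (real r * t / 2)\<bar> powr \<beta> / (\<omega> t * (2 * real (m + 1) * pi / r - t) powr \<gamma>)) X2"
  shows "\<bar>\<Sum>k\<le>K. a k * (fourier_partial_sum f k x - f x)\<bar>
    \<le> (real r + 1) / pi * (bnd0 p \<beta> \<gamma> r \<omega> N X1 Y1 X2 (BK a K r) + bndJ p \<beta> \<gamma> r \<omega> N X1 Y1 X2 (BK a K r))"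
proof -
  interpret S: setting p \<beta> \<gamma> "real r" \<omega> W N by (rule S)
  note Pm[measurable] = phi_meas[OF fm, of x]
  define b where "b = bnd0 p \<beta> \<gamma> r \<omega> N X1 Y1 X2 (BK a K r) + bndJ p \<beta> \<gamma> r \<omega> N X1 Y1 X2 (BK a K r)"
  have b0: "0 \<le> b" unfolding b_def using S.bnd_nonneg[OF X(1) Y1 X(2) BK_nonneg[OF nn]] by simp
  note RS = rep_sum[OF fm per fi, where x=x and a=a and K=K]
  have r1: "1 \<le> r" using S.r by simp
  have "ennreal \<bar>LBINT t:{0..pi}. phi f x t * KK a K t\<bar> \<le> (\<integral>\<^sup>+t. ennreal \<bar>phi f x t * KK a K t\<bar> * indicator {0..pi} t \<partial>lborel)"
    using RS by (intro abs_int_le) auto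
  also have "\<dots> \<le> (\<Sum>m\<in>M_set r. \<integral>\<^sup>+t. ennreal \<bar>phi f x t * KK a K t\<bar> * indicator (Rcell r m) t \<partial>lborel)
      + (\<Sum>m\<in>Lset r. \<integral>\<^sup>+t. ennreal \<bar>phi f x t * KK a K t\<bar> * indicator (Lcell r m) t \<partial>lborel)"
    by (rule cover_int[OF r1]) measurable
  also have "\<dots> \<le> (\<Sum>m\<in>M_set r. ennreal b) + (\<Sum>m\<in>Lset r. ennreal b)"
  proof (intro add_mono sum_mono)
    fix m assume m: "m \<in> M_set r"
    show "(\<integral>\<^sup>+t. ennreal \<bar>phi f x t * KK a K t\<bar> * indicator (Rcell r m) t \<partial>lborel) \<le> ennreal b"
      unfolding b_def using HR[OF m] by (intro right_cell[OF S fm nn s1 m H1 Y1]) auto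
  next
    fix m assume m: "m \<in> Lset r"
    show "(\<integral>\<^sup>+t. ennreal \<bar>phi f x t * KK a K t\<bar> * indicator (Lcell r m) t \<partial>lborel) \<le> ennreal b"
      unfolding b_def using HL[OF m] by (intro left_cell[OF S fm nn s1 m H1 Y1]) auto
  qed
  also have "\<dots> = ennreal ((real (card (M_set r)) + real (card (Lset r))) * b)"
  proof -
    have e: "ennreal (real n * b) = of_nat n * ennreal b" for n
      using b0 by (simp add: ennreal_mult ennreal_of_nat_eq_real_of_nat)
    show ?thesis using b0 by (simp add: distrib_right flip: e)
  qed
  also have "\<dots> \<le> ennreal ((real r + 1) * b)"
    using card_cells[of r] b0 by (intro ennreal_leI mult_right_mono) linarith+
  finally have "\<bar>LBINT t:{0..pi}. phi f x t * KK a K t\<bar> \<le> (real r + 1) * b"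
    using b0 by (subst (asm) ennreal_le_iff) auto
  moreover have "(\<Sum>k\<le>K. a k * (fourier_partial_sum f k x - f x)) = (LBINT t:{0..pi}. phi f x t * KK a K t) / pi"
    using RS by blast
  ultimately have "\<bar>\<Sum>k\<le>K. a k * (fourier_partial_sum f k x - f x)\<bar> \<le> (real r + 1) * b / pi"
    by (simp add: abs_divide divide_right_mono)
  then show ?thesis by (simp add: b_def)
qed



lemma limit_bound:
  fixes a Sf :: "nat \<Rightarrow> real"
  assumes nn: "\<And>k. 0 \<le> a k" and s: "a sums 1" and sT: "summable (\<lambda>k. a k * Sf k)"
    and sd: "summable (\<lambda>k. \<bar>a k - a (k + r)\<bar>)"
    and bnd: "\<And>K. \<bar>\<Sum>k\<le>K. a k * (Sf k - y)\<bar> \<le> P + Q * BK a K r"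
  shows "\<bar>(\<Sum>k. a k * Sf k) - y\<bar> \<le> P + Q * ((\<Sum>k. \<bar>a k - a (k + r)\<bar>) + (\<Sum>k<r. a k))"
proof -
  have sa: "summable a" using s by (rule sums_summable)
  have a1: "(\<Sum>k. a k) = 1" using s by (rule sums_unique[symmetric])
  have L1: "(\<lambda>K. \<Sum>k\<le>K. a k * (Sf k - y)) \<longlonglongrightarrow> (\<Sum>k. a k * Sf k) - y * 1"
  proof -
    have e: "(\<lambda>K. \<Sum>k\<le>K. a k * (Sf k - y)) = (\<lambda>K. (\<Sum>k\<le>K. a k * Sf k) - y * (\<Sum>k\<le>K. a k))"
      by (auto simp: algebra_simps sum_subtractf sum_distrib_left)
    have t1: "(\<lambda>n. \<Sum>i\<le>n. a i) \<longlonglongrightarrow> 1" using summable_LIMSEQ'[OF sa] a1 by simp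
    show ?thesis unfolding e
      by (rule tendsto_diff[OF summable_LIMSEQ'[OF sT] tendsto_mult_left[OF t1]])
  qed
  have z: "(\<lambda>K. a (K + 1 + i)) \<longlonglongrightarrow> 0" for i
    using LIMSEQ_ignore_initial_segment[OF summable_LIMSEQ_zero[OF sa], of "1 + i"] by (simp add: add.assoc)
  have tail: "(\<lambda>K. \<Sum>k=K+1..K+r. a k) \<longlonglongrightarrow> 0"
  proof -
    have e: "(\<Sum>k=K+1..K+r. a k) = (\<Sum>i<r. a (K + 1 + i))" for K
    proof -
      have "(\<Sum>k=K+1..K+r. a k) = (\<Sum>i=0..<r. a (i + (K + 1)))"
        using sum.shift_bounds_nat_ivl[of a 0 "K+1" r] by (simp add: atLeastLessThanSuc_atLeastAtMost[symmetric] add.commute)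
      then show ?thesis by (simp add: atLeast0LessThan add.commute add.left_commute)
    qed
    have "(\<lambda>K. \<Sum>i<r. a (K + 1 + i)) \<longlonglongrightarrow> (\<Sum>i<r. 0)" by (intro tendsto_sum z)
    then have "(\<lambda>K. \<Sum>i<r. a (K + 1 + i)) \<longlonglongrightarrow> 0" by simp
    then show ?thesis unfolding e .
  qed
  have L2: "(\<lambda>K. P + Q * BK a K r) \<longlonglongrightarrow> P + Q * ((\<Sum>k. \<bar>a k - a (k + r)\<bar>) + (\<Sum>k<r. a k) + 0)"
    unfolding BK_def by (intro tendsto_intros summable_LIMSEQ'[OF sd] tail)
  have "\<bar>(\<Sum>k. a k * Sf k) - y * 1\<bar> \<le> P + Q * ((\<Sum>k. \<bar>a k - a (k + r)\<bar>) + (\<Sum>k<r. a k) + 0)"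
    by (rule LIMSEQ_le[OF tendsto_rabs[OF L1] L2]) (use bnd in auto)
  then show ?thesis by simp
qed



lemma bnd_affine:
  "bnd0 p \<beta> \<gamma> r \<omega> N X1 Y1 X2 B + bndJ p \<beta> \<gamma> r \<omega> N X1 Y1 X2 B
   = (bnd0 p \<beta> \<gamma> r \<omega> N X1 Y1 X2 0 + bndJ p \<beta> \<gamma> r \<omega> N X1 Y1 X2 0)
     + B * ((bnd0 p \<beta> \<gamma> r \<omega> N X1 Y1 X2 1 - bnd0 p \<beta> \<gamma> r \<omega> N X1 Y1 X2 0)
          + (bndJ p \<beta> \<gamma> r \<omega> N X1 Y1 X2 1 - bndJ p \<beta> \<gamma> r \<omega> N X1 Y1 X2 0))"
  by (simp add: bnd0_def bndJ_def algebra_simps)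

lemma dl_powr:
  assumes r: "0 < r" and N: "0 < N"
  shows "dlf r N powr x = (pi / r) powr x * N powr (- x)"
proof -
  have e: "dlf r N = (pi / r) / N" by (simp add: dlf_def)
  have "dlf r N powr x = ((pi / r) / N) powr x" unfolding e ..
  also have "\<dots> = (pi / r) powr x / N powr x" by (rule powr_divide)
  also have "\<dots> = (pi / r) powr x * N powr (- x)" by (simp add: powr_minus divide_inverse)
  finally show ?thesis .
qed

lemma mod_ceil:
  assumes w: "modulus_type \<omega>" and x: "0 \<le> x" and c: "1 \<le> c" and cx: "c * x \<le> pi"
  shows "\<omega> (c * x) \<le> 2 * c * \<omega> x"
proof -
  define m where "m = nat \<lceil>c\<rceil>"
  have m1: "c \<le> real m" unfolding m_def by linarith
  have m2: "real m \<le> 2 * c" unfolding m_def using c by linarith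
  have "real m * x \<le> 2 * c * x" using m2 x by (intro mult_right_mono) auto
  also have "\<dots> \<le> 2 * pi" using cx by simp
  finally have mx: "real m * x \<le> 2 * pi" .
  have "\<omega> (c * x) \<le> \<omega> (real m * x)" using m1 x c cx mx by (intro mod_mono[OF w]) (auto intro: mult_right_mono)
  also have "\<dots> \<le> real m * \<omega> x" by (rule mod_mult[OF w x mx])
  also have "\<dots> \<le> 2 * c * \<omega> x"
  proof -
    have "x \<le> c * x" using c x by (simp add: mult_le_cancel_right1)
    then have x2: "x \<le> 2 * pi" using cx pi_gt_zero by linarith
    show ?thesis using m2 mod_nonneg[OF w x x2] by (intro mult_right_mono) auto
  qed
  finally show ?thesis .
qed

context setting begin

lemma wdl_pos: "0 < \<omega> (dlf r N)"
  using wpos[of "dlf r N"] dl_pos dl_le pr_le dl_eq by auto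

lemma final_alg:
  fixes C A :: real
  assumes C: "0 < C" and A: "1 \<le> C * N * A"
  defines "X1 \<equiv> C * N powr (- 1 / p)" and "Y1 \<equiv> C * N powr (\<beta> + 1 / p) * \<omega> (pi / N)"
    and "X2 \<equiv> C * N powr \<gamma>"
  defines "K1 \<equiv> pi / 2 * C ^ 3 + 4 * pi * C ^ 3 / sin (pi / (2 * r))"
    and "K2 \<equiv> pi / 2 * C * kap p (\<gamma> - 1 - \<beta>) * (pi / r) powr (1 + \<beta>) * (pi / r) powr ((\<gamma> - \<beta> - 1 / p) - 1)
          + 2 * (C * (pi / r) powr (1 + \<beta>) * kap p (\<gamma> - 1 - \<beta>) * (pi / r) powr (\<gamma> - \<beta> - 1 / p) / (4 * sin (pi / (2 * r))))"
  shows "bnd0 p \<beta> \<gamma> r \<omega> N X1 Y1 X2 0 + bndJ p \<beta> \<gamma> r \<omega> N X1 Y1 X2 0 \<le> K1 * N powr (\<beta> + 1/p + 1) * A * \<omega> (pi / N)"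
    and "(bnd0 p \<beta> \<gamma> r \<omega> N X1 Y1 X2 1 - bnd0 p \<beta> \<gamma> r \<omega> N X1 Y1 X2 0)
          + (bndJ p \<beta> \<gamma> r \<omega> N X1 Y1 X2 1 - bndJ p \<beta> \<gamma> r \<omega> N X1 Y1 X2 0)
         \<le> K2 * N powr (\<beta> + 1/p + 1) * \<omega> (pi / N)"
proof -
  define d where "d = dlf r N"
  define wN where "wN = \<omega> (pi / N)"
  define wd where "wd = \<omega> d"
  define wp where "wp = \<omega> pi"
  define q where "q = pi / r"
  define k where "k = kap p (\<gamma> - 1 - \<beta>)"
  define s0 where "s0 = sin (pi / (2 * r))"
  define E where "E = \<gamma> - \<beta> - 1 / p"
  have N0: "0 < N" using N by simp
  have rp: "0 < r" using r by simp
  have q: "0 < q" using rp by (simp add: q_def)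
  have d: "0 < d" using dl_pos dl_eq by (simp add: d_def)
  have s0: "0 < s0" using s0_pos by (simp add: s0_def)
  have k: "0 \<le> k" using kap_nonneg by (simp add: k_def)
  have wd: "0 < wd" using wdl_pos by (simp add: wd_def d_def)
  have piN: "pi / N \<le> pi" using N by (simp add: field_simps mult_le_cancel_left1)
  have piN2: "pi / N \<le> 2 * pi" using piN pi_gt_zero by linarith
  have wp: "0 < wp" using wpos[of pi] by (simp add: wp_def)
  have wN0: "0 < wN" using wpos[of "pi / N"] N0 piN2 by (simp add: wN_def)
  have rd: "r * d = pi / N" using rp by (simp add: d_def dlf_def)
  have dpN: "d \<le> pi / N" using r N0 by (simp add: d_def dlf_def field_simps mult_le_cancel_left1)
  have wdN: "wd \<le> wN" unfolding wd_def wN_def using mod_mono[OF w, of d "pi / N"] d dpN piN by simp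
  have wrd: "wN \<le> 2 * r * wd"
  proof -
    have "r * d \<le> pi" using rd piN by simp
    then show ?thesis using mod_ceil[OF w _ r, of d] d rd by (simp add: wN_def wd_def)
  qed
  have wNp: "wp \<le> 2 * N * wN"
  proof -
    have "N * (pi / N) \<le> pi" using N0 by simp
    then have "\<omega> (N * (pi / N)) \<le> 2 * N * \<omega> (pi / N)" using mod_ceil[OF w _ N, of "pi / N"] N0 by simp
    then show ?thesis using N0 by (simp add: wp_def wN_def)
  qed
  have NA: "1 \<le> C * N * A" by (rule A)
  have A0: "0 < A"
  proof (rule ccontr)
    assume "\<not> 0 < A"
    then have "C * N * A \<le> 0" using C N0 by (simp add: mult_nonneg_nonpos)
    then show False using NA by simp
  qed
  have Nmono: "N powr a \<le> N powr b" if "a \<le> b" for a b using N that by (intro powr_mono) auto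
  have Ep: "(\<gamma> - 1 - \<beta>) + 1 - 1/p = E" by (simp add: E_def)
  have b00: "bnd0 p \<beta> \<gamma> r \<omega> N X1 Y1 X2 0 = pi / 2 * C^2 * (N powr (- 1 / p) * N powr (\<beta> + 1 / p)) * wN"
    by (simp add: bnd0_def X1_def Y1_def wN_def power2_eq_square)
  have bJ0: "bndJ p \<beta> \<gamma> r \<omega> N X1 Y1 X2 0 = 1 / s0 * C^2 * (N powr (- 1 / p) * N powr (\<beta> + 1 / p)) * wp * d * (wN / wd)"
    by (simp add: bndJ_def X1_def Y1_def wN_def wd_def wp_def d_def s0_def power2_eq_square)
  have e1: "N powr (- 1 / p) * N powr (\<beta> + 1 / p) = N powr \<beta>" by (simp flip: powr_add)
  have ePow: "N powr \<beta> * N = N powr (\<beta> + 1)" using N0 by (simp add: powr_add)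
  have T1: "pi / 2 * C^2 * N powr \<beta> * wN \<le> pi / 2 * C^3 * N powr (\<beta> + 1/p + 1) * A * wN"
  proof -
    have "pi / 2 * C^2 * N powr \<beta> * wN = pi / 2 * C^2 * N powr \<beta> * wN * 1" by simp
    also have "\<dots> \<le> pi / 2 * C^2 * N powr \<beta> * wN * (C * N * A)"
      using NA C wN0 by (intro mult_left_mono) auto
    also have "\<dots> = pi / 2 * C^3 * (N powr \<beta> * N) * A * wN" by (simp add: power3_eq_cube power2_eq_square)
    also have "\<dots> \<le> pi / 2 * C^3 * N powr (\<beta> + 1/p + 1) * A * wN"
      unfolding ePow using Nmono[of "\<beta> + 1" "\<beta> + 1/p + 1"] p C A0 wN0 by (intro mult_right_mono mult_left_mono) auto
    finally show ?thesis .
  qed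
  have T2: "1 / s0 * C^2 * N powr \<beta> * wp * d * (wN / wd) \<le> 4 * pi * C^3 / s0 * N powr (\<beta> + 1/p + 1) * A * wN"
  proof -
    have "wN / wd \<le> 2 * r" using wrd wd by (simp add: field_simps)
    then have "d * (wN / wd) \<le> d * (2 * r)" using d by (intro mult_left_mono) auto
    also have "d * (2 * r) = 2 * (r * d)" by (simp add: algebra_simps)
    also have "\<dots> = 2 * pi / N" using rd by simp
    finally have a1: "d * (wN / wd) \<le> 2 * pi / N" .
    have "1 / s0 * C^2 * N powr \<beta> * wp * d * (wN / wd) = (1 / s0 * C^2 * N powr \<beta> * wp) * (d * (wN / wd))" by simp
    also have "\<dots> \<le> (1 / s0 * C^2 * N powr \<beta> * wp) * (2 * pi / N)"
      using a1 s0 wp by (intro mult_left_mono) auto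
    also have "\<dots> \<le> (1 / s0 * C^2 * N powr \<beta> * (2 * N * wN)) * (2 * pi / N)"
      using wNp s0 N0 by (intro mult_right_mono mult_left_mono) auto
    also have "\<dots> = 4 * pi * C^2 / s0 * N powr \<beta> * wN" using N0 by (simp add: field_simps)
    also have "\<dots> = 4 * pi * C^2 / s0 * N powr \<beta> * wN * 1" by simp
    also have "\<dots> \<le> 4 * pi * C^2 / s0 * N powr \<beta> * wN * (C * N * A)"
      using NA C wN0 s0 by (intro mult_left_mono) auto
    also have "\<dots> = 4 * pi * C^3 / s0 * (N powr \<beta> * N) * A * wN" by (simp add: power3_eq_cube power2_eq_square)
    also have "\<dots> \<le> 4 * pi * C^3 / s0 * N powr (\<beta> + 1/p + 1) * A * wN"
      unfolding ePow using Nmono[of "\<beta> + 1" "\<beta> + 1/p + 1"] p C A0 wN0 s0 by (intro mult_right_mono mult_left_mono) auto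
    finally show ?thesis .
  qed
  show "bnd0 p \<beta> \<gamma> r \<omega> N X1 Y1 X2 0 + bndJ p \<beta> \<gamma> r \<omega> N X1 Y1 X2 0 \<le> K1 * N powr (\<beta> + 1/p + 1) * A * \<omega> (pi / N)"
  proof -
    have L: "bnd0 p \<beta> \<gamma> r \<omega> N X1 Y1 X2 0 + bndJ p \<beta> \<gamma> r \<omega> N X1 Y1 X2 0
        = pi / 2 * C^2 * N powr \<beta> * wN + 1 / s0 * C^2 * N powr \<beta> * wp * d * (wN / wd)"
      unfolding b00 bJ0 e1 ..
    have R: "K1 * N powr (\<beta> + 1/p + 1) * A * \<omega> (pi / N)
        = pi / 2 * C^3 * N powr (\<beta> + 1/p + 1) * A * wN + 4 * pi * C^3 / s0 * N powr (\<beta> + 1/p + 1) * A * wN"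
      by (simp add: K1_def wN_def s0_def algebra_simps)
    show ?thesis by (simp only: L R) (rule add_mono[OF T1 T2])
  qed
  have b01: "bnd0 p \<beta> \<gamma> r \<omega> N X1 Y1 X2 1 - bnd0 p \<beta> \<gamma> r \<omega> N X1 Y1 X2 0
      = pi / 2 * C * k * q powr (1 + \<beta>) * (N powr \<gamma> * (d powr E / d)) * wd"
    by (simp add: bnd0_def X2_def k_def q_def wd_def d_def E_def field_simps)
  have bJ1: "bndJ p \<beta> \<gamma> r \<omega> N X1 Y1 X2 1 - bndJ p \<beta> \<gamma> r \<omega> N X1 Y1 X2 0
      = C * q powr (1 + \<beta>) * k / (4 * s0) * wp * (N powr \<gamma> * d powr E)"
    by (simp add: bndJ_def X2_def k_def q_def wp_def d_def s0_def E_def field_simps)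
  have dE1: "N powr \<gamma> * (d powr E / d) = q powr (E - 1) * N powr (\<beta> + 1/p + 1)"
  proof -
    have "d powr E / d = d powr (E - 1)" using d by (simp add: powr_diff)
    also have "\<dots> = q powr (E - 1) * N powr (- (E - 1))" unfolding d_def q_def by (rule dl_powr[OF rp N0])
    finally have "N powr \<gamma> * (d powr E / d) = q powr (E - 1) * (N powr \<gamma> * N powr (- (E - 1)))" by simp
    also have "N powr \<gamma> * N powr (- (E - 1)) = N powr (\<beta> + 1/p + 1)"
    proof -
      have "\<gamma> + (- (E - 1)) = \<beta> + 1/p + 1" by (simp add: E_def)
      then show ?thesis by (simp only: powr_add[symmetric])
    qed
    finally show ?thesis .
  qed
  have dE2: "N powr \<gamma> * d powr E = q powr E * N powr (\<beta> + 1/p)"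
  proof -
    have "d powr E = q powr E * N powr (- E)" unfolding d_def q_def by (rule dl_powr[OF rp N0])
    then have "N powr \<gamma> * d powr E = q powr E * (N powr \<gamma> * N powr (- E))" by simp
    also have "N powr \<gamma> * N powr (- E) = N powr (\<beta> + 1/p)"
    proof -
      have "\<gamma> + (- E) = \<beta> + 1/p" by (simp add: E_def)
      then show ?thesis by (simp only: powr_add[symmetric])
    qed
    finally show ?thesis .
  qed
  have T3: "pi / 2 * C * k * q powr (1 + \<beta>) * (q powr (E - 1) * N powr (\<beta> + 1/p + 1)) * wd
      \<le> pi / 2 * C * k * q powr (1 + \<beta>) * q powr (E - 1) * N powr (\<beta> + 1/p + 1) * wN"
  proof -
    have "0 \<le> pi / 2 * C * k * q powr (1 + \<beta>) * q powr (E - 1) * N powr (\<beta> + 1/p + 1)" using C k by simp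
    then have "(pi / 2 * C * k * q powr (1 + \<beta>) * q powr (E - 1) * N powr (\<beta> + 1/p + 1)) * wd
        \<le> (pi / 2 * C * k * q powr (1 + \<beta>) * q powr (E - 1) * N powr (\<beta> + 1/p + 1)) * wN"
      using wdN by (rule mult_left_mono[rotated])
    then show ?thesis by (simp only: mult.assoc)
  qed
  have T4: "C * q powr (1 + \<beta>) * k / (4 * s0) * wp * (q powr E * N powr (\<beta> + 1/p))
      \<le> 2 * (C * q powr (1 + \<beta>) * k * q powr E / (4 * s0)) * N powr (\<beta> + 1/p + 1) * wN"
  proof -
    have c0: "0 \<le> C * q powr (1 + \<beta>) * k / (4 * s0) * (q powr E * N powr (\<beta> + 1/p))" using C k s0 by simp
    have "C * q powr (1 + \<beta>) * k / (4 * s0) * wp * (q powr E * N powr (\<beta> + 1/p))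
        = (C * q powr (1 + \<beta>) * k / (4 * s0) * (q powr E * N powr (\<beta> + 1/p))) * wp" by simp
    also have "\<dots> \<le> (C * q powr (1 + \<beta>) * k / (4 * s0) * (q powr E * N powr (\<beta> + 1/p))) * (2 * N * wN)"
      using wNp c0 by (rule mult_left_mono)
    also have "\<dots> = 2 * (C * q powr (1 + \<beta>) * k * q powr E / (4 * s0)) * (N powr (\<beta> + 1/p) * N) * wN"
      by (simp add: field_simps)
    also have "N powr (\<beta> + 1/p) * N = N powr (\<beta> + 1/p + 1)" using N0 by (simp add: powr_add)
    finally show ?thesis .
  qed
  show "(bnd0 p \<beta> \<gamma> r \<omega> N X1 Y1 X2 1 - bnd0 p \<beta> \<gamma> r \<omega> N X1 Y1 X2 0)
          + (bndJ p \<beta> \<gamma> r \<omega> N X1 Y1 X2 1 - bndJ p \<beta> \<gamma> r \<omega> N X1 Y1 X2 0)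
         \<le> K2 * N powr (\<beta> + 1/p + 1) * \<omega> (pi / N)"
  proof -
    have L: "(bnd0 p \<beta> \<gamma> r \<omega> N X1 Y1 X2 1 - bnd0 p \<beta> \<gamma> r \<omega> N X1 Y1 X2 0)
          + (bndJ p \<beta> \<gamma> r \<omega> N X1 Y1 X2 1 - bndJ p \<beta> \<gamma> r \<omega> N X1 Y1 X2 0)
        = pi / 2 * C * k * q powr (1 + \<beta>) * (q powr (E - 1) * N powr (\<beta> + 1/p + 1)) * wd
          + C * q powr (1 + \<beta>) * k / (4 * s0) * wp * (q powr E * N powr (\<beta> + 1/p))"
      unfolding b01 bJ1 dE1 dE2 ..
    have R: "K2 * N powr (\<beta> + 1/p + 1) * \<omega> (pi / N)
        = pi / 2 * C * k * q powr (1 + \<beta>) * q powr (E - 1) * N powr (\<beta> + 1/p + 1) * wN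
          + 2 * (C * q powr (1 + \<beta>) * k * q powr E / (4 * s0)) * N powr (\<beta> + 1/p + 1) * wN"
      by (simp add: K2_def wN_def k_def q_def s0_def E_def algebra_simps)
    show ?thesis by (simp only: L R) (rule add_mono[OF T3 T4])
  qed
qed

end

lemma V_nonneg:
  assumes X2: "0 \<le> X2" and r: "1 \<le> r" and w: "modulus_type \<omega>" and wpos: "\<And>t. 0 < t \<Longrightarrow> t \<le> 2*pi \<Longrightarrow> 0 < \<omega> t"
    and N: "1 \<le> N"
  shows "0 \<le> (bnd0 p \<beta> \<gamma> r \<omega> N X1 Y1 X2 1 - bnd0 p \<beta> \<gamma> r \<omega> N X1 Y1 X2 0)
          + (bndJ p \<beta> \<gamma> r \<omega> N X1 Y1 X2 1 - bndJ p \<beta> \<gamma> r \<omega> N X1 Y1 X2 0)"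
proof -
  have d: "0 < dlf r N" using r N by (simp add: dlf_def)
  have dp: "dlf r N \<le> pi" using r N by (simp add: dlf_def field_simps) (smt (verit) mult_le_cancel_left1 mult_mono pi_gt_zero)
  have wd: "0 \<le> \<omega> (dlf r N)" using mod_nonneg[OF w, of "dlf r N"] d dp by simp
  have wp: "0 \<le> \<omega> pi" using mod_nonneg[OF w, of pi] by simp
  have s0: "0 < sin (pi / (2 * r))"
  proof -
    have a: "pi / (2 * r) \<le> pi / 2" using r by (simp add: field_simps mult_le_cancel_left1)
    have b: "0 < pi / (2 * r)" using r by simp
    have c: "pi / (2 * r) < pi" using a pi_gt_zero by linarith
    show ?thesis using b c by (rule sin_gt_zero)
  qed
  show ?thesis unfolding bnd0_def bndJ_def
    using X2 d wd wp s0 kap_nonneg by (simp add: mult_nonneg_nonneg divide_nonneg_nonneg)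
qed


theorem theorem1:
  fixes p \<beta> \<gamma> x :: real and r :: nat and f \<omega> :: "real \<Rightarrow> real"
    and a :: "nat \<Rightarrow> nat \<Rightarrow> real"
  assumes hp: "1 \<le> p"
    and h\<beta>: "0 \<le> \<beta>"
    and hr: "1 \<le> r"
    and hf: "in_Lp p f"
    and h\<omega>: "modulus_type \<omega>"
    and h\<omega>pos: "\<forall>t. 0 < t \<and> t \<le> 2*pi \<longrightarrow> 0 < \<omega> t"
    and hA: "summation_matrix a"
    and h\<gamma>: "0 < \<gamma>" "\<gamma> < \<beta> + 1/p"
    and hC: "\<exists>C>0. \<forall>n::nat.
      dual_norm_le p {0 .. pi / (r * (n+1))}
          (\<lambda>t. \<omega> t / (t * sin (r * t / 2) powr \<beta>))
          (C * (n+1) powr (\<beta> + 1/p) * \<omega> (pi / (n+1)))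
      \<and> (\<forall>m\<in>M_set r.
          Lnorm_le p {2*m*pi/r .. 2*m*pi/r + pi/(r*(n+1))}
            (\<lambda>t. \<bar>phi f x t\<bar> / \<omega> t * \<bar>sin (r*t/2)\<bar> powr \<beta>)
            (C * (n+1) powr (-1/p))
        \<and> Lnorm_le p {2*m*pi/r + pi/(r*(n+1)) .. 2*m*pi/r + pi/r}
            (\<lambda>t. \<bar>phi f x t\<bar> * \<bar>sin (r*t/2)\<bar> powr \<beta> / (\<omega> t * (t - 2*m*pi/r) powr \<gamma>))
            (C * (n+1) powr \<gamma>))
      \<and> (2 \<le> r \<longrightarrow> (\<forall>m\<in>{0 ..< r div 2}.
          Lnorm_le p {2*(m+1)*pi/r - pi/(r*(n+1)) .. 2*(m+1)*pi/r}
            (\<lambda>t. \<bar>phi f x t\<bar> / \<omega> t * \<bar>sin (r*t/2)\<bar> powr \<beta>)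
            (C * (n+1) powr (-1/p))
        \<and> Lnorm_le p {2*(m+1)*pi/r - pi/r .. 2*(m+1)*pi/r - pi/(r*(n+1))}
            (\<lambda>t. \<bar>phi f x t\<bar> * \<bar>sin (r*t/2)\<bar> powr \<beta> / (\<omega> t * (2*(m+1)*pi/r - t) powr \<gamma>))
            (C * (n+1) powr \<gamma>)))
      \<and> 1 \<le> C * (\<Sum>l=0..n. \<Sum>k=l..r+l-1. a n k)"
  shows "\<exists>C'. \<forall>n::nat.
      summable (\<lambda>k. a n k * fourier_partial_sum f k x)
      \<and> summable (\<lambda>k. \<bar>a n k - a n (k + r)\<bar>)
      \<longrightarrow> \<bar>T_mean a f n x - f x\<bar>
          \<le> C' * (n+1) powr (\<beta> + 1/p + 1) * A_var a n r * \<omega> (pi / (n+1))"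

proof -
  obtain C where C: "0 < C" and hCn: "\<And>n::nat.
      dual_norm_le p {0 .. pi / (r * (n+1))}
          (\<lambda>t. \<omega> t / (t * sin (r * t / 2) powr \<beta>))
          (C * (n+1) powr (\<beta> + 1/p) * \<omega> (pi / (n+1)))
      \<and> (\<forall>m\<in>M_set r.
          Lnorm_le p {2*m*pi/r .. 2*m*pi/r + pi/(r*(n+1))}
            (\<lambda>t. \<bar>phi f x t\<bar> / \<omega> t * \<bar>sin (r*t/2)\<bar> powr \<beta>)
            (C * (n+1) powr (-1/p))
        \<and> Lnorm_le p {2*m*pi/r + pi/(r*(n+1)) .. 2*m*pi/r + pi/r}
            (\<lambda>t. \<bar>phi f x t\<bar> * \<bar>sin (r*t/2)\<bar> powr \<beta> / (\<omega> t * (t - 2*m*pi/r) powr \<gamma>))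
            (C * (n+1) powr \<gamma>))
      \<and> (2 \<le> r \<longrightarrow> (\<forall>m\<in>{0 ..< r div 2}.
          Lnorm_le p {2*(m+1)*pi/r - pi/(r*(n+1)) .. 2*(m+1)*pi/r}
            (\<lambda>t. \<bar>phi f x t\<bar> / \<omega> t * \<bar>sin (r*t/2)\<bar> powr \<beta>)
            (C * (n+1) powr (-1/p))
        \<and> Lnorm_le p {2*(m+1)*pi/r - pi/r .. 2*(m+1)*pi/r - pi/(r*(n+1))}
            (\<lambda>t. \<bar>phi f x t\<bar> * \<bar>sin (r*t/2)\<bar> powr \<beta> / (\<omega> t * (2*(m+1)*pi/r - t) powr \<gamma>))
            (C * (n+1) powr \<gamma>)))
      \<and> 1 \<le> C * (\<Sum>l=0..n. \<Sum>k=l..r+l-1. a n k)"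
    using hC by blast
  have fm[measurable]: "f \<in> borel_measurable borel" using hf by (simp add: in_Lp_def)
  have per: "\<And>u. f (u + 2*pi) = f u" using hf by (simp add: in_Lp_def)
  have fi: "set_integrable lborel {-pi..pi} f" by (rule inLp_int[OF hf hp])
  define W where "W t = \<omega> (max 0 (min (2*pi) t))" for t
  have Wc: "continuous_on UNIV W"
  proof -
    have c1: "continuous_on {0..2*pi} \<omega>" using h\<omega> by (simp add: modulus_type_def)
    have c2: "continuous_on UNIV (\<lambda>t::real. max 0 (min (2*pi) t))" by (intro continuous_intros)
    have "(\<lambda>t::real. max 0 (min (2*pi) t)) ` UNIV \<subseteq> {0..2*pi}" by auto
    from continuous_on_compose2[OF c1 c2 this] show ?thesis by (simp add: W_def)
  qed
  have Wm[measurable]: "W \<in> borel_measurable borel" by (rule borel_measurable_continuous_onI[OF Wc])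
  have WW: "\<And>t. 0 \<le> t \<Longrightarrow> t \<le> 2*pi \<Longrightarrow> W t = \<omega> t" by (simp add: W_def)
  have wpos: "\<And>t. 0 < t \<Longrightarrow> t \<le> 2*pi \<Longrightarrow> 0 < \<omega> t" using h\<omega>pos by blast
  have r1: "1 \<le> real r" using hr by simp
  define K1 where "K1 = pi / 2 * C ^ 3 + 4 * pi * C ^ 3 / sin (pi / (2 * real r))"
  define K2 where "K2 = pi / 2 * C * kap p (\<gamma> - 1 - \<beta>) * (pi / real r) powr (1 + \<beta>) * (pi / real r) powr ((\<gamma> - \<beta> - 1 / p) - 1)
          + 2 * (C * (pi / real r) powr (1 + \<beta>) * kap p (\<gamma> - 1 - \<beta>) * (pi / real r) powr (\<gamma> - \<beta> - 1 / p) / (4 * sin (pi / (2 * real r))))"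
  show ?thesis
  proof (intro exI[of _ "(real r + 1) / pi * (K1 + 2 * K2)"] allI impI)
    fix n :: nat
    assume summ: "summable (\<lambda>k. a n k * fourier_partial_sum f k x) \<and> summable (\<lambda>k. \<bar>a n k - a n (k + r)\<bar>)"
    define N where "N = real n + 1"
    have N1: "1 \<le> N" by (simp add: N_def)
    have Sset: "setting p \<beta> \<gamma> (real r) \<omega> W N"
      by unfold_locales (use hp h\<beta> h\<gamma> r1 h\<omega> wpos WW N1 in auto)
    interpret S: setting p \<beta> \<gamma> "real r" \<omega> W N by (rule Sset)
    have eN: "real (n + 1) = N" by (simp add: N_def)
    have eD: "pi / real (r * (n + 1)) = dlf (real r) N" by (simp add: dlf_def N_def algebra_simps)
    have e2: "\<And>m. real (2 * m) = 2 * real m" by simp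
    note Hn = hCn[of n, unfolded eD eN e2]
    define X1 where "X1 = C * N powr (- 1 / p)"
    define Y1 where "Y1 = C * N powr (\<beta> + 1 / p) * \<omega> (pi / N)"
    define X2 where "X2 = C * N powr \<gamma>"
    have H1: "dual_norm_le p {0..dlf (real r) N} (\<lambda>t. \<omega> t / (t * sin (real r * t / 2) powr \<beta>)) Y1"
      using Hn by (simp add: Y1_def)
    have HR: "\<And>m. m \<in> M_set r \<Longrightarrow>
       Lnorm_le p {2 * real m * pi / r .. 2 * real m * pi / r + dlf r N}
               (\<lambda>t. \<bar>phi f x t\<bar> / \<omega> t * \<bar>sin (real r * t / 2)\<bar> powr \<beta>) X1 \<and>
       Lnorm_le p {2 * real m * pi / r + dlf r N .. 2 * real m * pi / r + pi / r}
               (\<lambda>t. \<bar>phi f x t\<bar> * \<bar>sin (real r * t / 2)\<bar> powr \<beta> / (\<omega> t * (t - 2 * real m * pi / r) powr \<gamma>)) X2"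
      using Hn by (simp add: X1_def X2_def)
    have HL: "\<And>m. m \<in> Lset r \<Longrightarrow>
       Lnorm_le p {2 * real (m + 1) * pi / r - dlf r N .. 2 * real (m + 1) * pi / r}
               (\<lambda>t. \<bar>phi f x t\<bar> / \<omega> t * \<bar>sin (real r * t / 2)\<bar> powr \<beta>) X1 \<and>
       Lnorm_le p {2 * real (m + 1) * pi / r - pi / r .. 2 * real (m + 1) * pi / r - dlf r N}
               (\<lambda>t. \<bar>phi f x t\<bar> * \<bar>sin (real r * t / 2)\<bar> powr \<beta> / (\<omega> t * (2 * real (m + 1) * pi / r - t) powr \<gamma>)) X2"
    proof -
      fix m assume m: "m \<in> Lset r"
      then have "2 \<le> r" "m \<in> {0..<r div 2}" by (auto simp: Lset_def split: if_splits)
      then show "?thesis m" using Hn unfolding X1_def X2_def by blast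
    qed
    have Hv: "1 \<le> C * (\<Sum>l=0..n. \<Sum>k=l..r+l-1. a n k)" using Hn by blast
    define b where "b = a n"
    have nn: "\<And>k. 0 \<le> b k" using hA by (simp add: summation_matrix_def b_def)
    have bs: "b sums 1" using hA by (simp add: summation_matrix_def b_def)
    have sb: "summable b" using bs by (rule sums_summable)
    have b1: "(\<Sum>k. b k) = 1" using bs by (rule sums_unique[symmetric])
    have s1: "\<And>K. (\<Sum>k\<le>K. b k) \<le> 1"
    proof -
      fix K
      have "(\<Sum>k\<le>K. b k) \<le> (\<Sum>k. b k)" using sb nn by (intro sum_le_suminf) auto
      then show "(\<Sum>k\<le>K. b k) \<le> 1" using b1 by simp
    qed
    have sT: "summable (\<lambda>k. b k * fourier_partial_sum f k x)" using summ by (simp add: b_def)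
    have sd: "summable (\<lambda>k. \<bar>b k - b (k + r)\<bar>)" using summ by (simp add: b_def)
    define A where "A = (\<Sum>k. \<bar>b k - b (k + r)\<bar>)"
    have X: "0 \<le> X1" "0 \<le> X2" using C by (simp_all add: X1_def X2_def)
    have Y1: "0 \<le> Y1"
    proof -
      have "pi / N \<le> 2 * pi" using N1 pi_gt_zero by (simp add: field_simps)
      then have "0 \<le> \<omega> (pi / N)" using mod_nonneg[OF h\<omega>, of "pi / N"] N1 by simp
      then show ?thesis using C by (simp add: Y1_def)
    qed
    define U where "U = bnd0 p \<beta> \<gamma> r \<omega> N X1 Y1 X2 0 + bndJ p \<beta> \<gamma> r \<omega> N X1 Y1 X2 0"
    define V where "V = (bnd0 p \<beta> \<gamma> r \<omega> N X1 Y1 X2 1 - bnd0 p \<beta> \<gamma> r \<omega> N X1 Y1 X2 0)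
          + (bndJ p \<beta> \<gamma> r \<omega> N X1 Y1 X2 1 - bndJ p \<beta> \<gamma> r \<omega> N X1 Y1 X2 0)"
    have V0: "0 \<le> V" unfolding V_def by (rule V_nonneg[OF X(2) r1 h\<omega> wpos N1])
    have Kb: "\<bar>\<Sum>k\<le>K. b k * (fourier_partial_sum f k x - f x)\<bar> \<le> (real r + 1) / pi * U + (real r + 1) / pi * V * BK b K r" for K
    proof -
      have "\<bar>\<Sum>k\<le>K. b k * (fourier_partial_sum f k x - f x)\<bar>
          \<le> (real r + 1) / pi * (bnd0 p \<beta> \<gamma> r \<omega> N X1 Y1 X2 (BK b K r) + bndJ p \<beta> \<gamma> r \<omega> N X1 Y1 X2 (BK b K r))"
        by (rule Kbound[OF Sset fm per fi nn s1 H1 Y1 X HR HL])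
      also have "\<dots> = (real r + 1) / pi * U + (real r + 1) / pi * V * BK b K r"
        unfolding bnd_affine[of p \<beta> \<gamma> "real r" \<omega> N X1 Y1 X2 "BK b K r"] U_def V_def by (simp add: algebra_simps)
      finally show ?thesis .
    qed
    have LB: "\<bar>(\<Sum>k. b k * fourier_partial_sum f k x) - f x\<bar>
        \<le> (real r + 1) / pi * U + (real r + 1) / pi * V * (A + (\<Sum>k<r. b k))"
      unfolding A_def by (rule limit_bound[OF nn bs sT sd Kb])
    have win: "(\<Sum>k<r. b k) \<le> A"
      using window_le[OF nn sb sd hr, of 0] by (simp add: A_def atLeast0LessThan)
    have NA: "1 \<le> C * N * A"
    proof -
      have "(\<Sum>l=0..n. \<Sum>k=l..r+l-1. a n k) \<le> (\<Sum>l=0..n. A)"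
      proof (intro sum_mono)
        fix l
        have "{l..r+l-1} = {l..<l+r}" using hr by auto
        then show "(\<Sum>k=l..r+l-1. a n k) \<le> A"
          using window_le[OF nn sb sd hr, of l] by (simp add: A_def b_def)
      qed
      also have "\<dots> = N * A" by (simp add: N_def)
      finally have "C * (\<Sum>l=0..n. \<Sum>k=l..r+l-1. a n k) \<le> C * (N * A)" using C by (intro mult_left_mono) auto
      then show ?thesis using Hv by (simp add: mult.assoc)
    qed
    note FA = S.final_alg[OF C NA]
    have FU: "U \<le> K1 * N powr (\<beta> + 1/p + 1) * A * \<omega> (pi / N)"
      using FA(1) by (simp add: U_def X1_def Y1_def X2_def K1_def)
    have FV: "V \<le> K2 * N powr (\<beta> + 1/p + 1) * \<omega> (pi / N)"
      using FA(2) by (simp add: V_def X1_def Y1_def X2_def K2_def)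
    define Z where "Z = N powr (\<beta> + 1/p + 1) * \<omega> (pi / N)"
    have c0: "0 \<le> (real r + 1) / pi" by simp
    have "\<bar>T_mean a f n x - f x\<bar> \<le> (real r + 1) / pi * U + (real r + 1) / pi * V * (A + (\<Sum>k<r. b k))"
      using LB by (simp add: T_mean_def b_def)
    also have "\<dots> \<le> (real r + 1) / pi * U + (real r + 1) / pi * V * (2 * A)"
      using win V0 c0 by (intro add_left_mono mult_left_mono) (auto intro: mult_nonneg_nonneg)
    also have "\<dots> = (real r + 1) / pi * (U + 2 * A * V)" by (simp add: algebra_simps)
    also have "\<dots> \<le> (real r + 1) / pi * (K1 * Z * A + 2 * A * (K2 * Z))"
    proof -
      have A0: "0 \<le> A" using win nn by (metis order_trans sum_nonneg)
      have "U + 2 * A * V \<le> K1 * Z * A + 2 * A * (K2 * Z)"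
        using FU FV A0 by (intro add_mono mult_left_mono) (auto simp: Z_def algebra_simps)
      then show ?thesis using c0 by (rule mult_left_mono)
    qed
    also have "\<dots> = (real r + 1) / pi * (K1 + 2 * K2) * N powr (\<beta> + 1 / p + 1) * A * \<omega> (pi / N)"
      by (simp add: Z_def algebra_simps)
    finally have fin: "\<bar>T_mean a f n x - f x\<bar> \<le> (real r + 1) / pi * (K1 + 2 * K2) * N powr (\<beta> + 1 / p + 1) * A * \<omega> (pi / N)" .
    show "\<bar>T_mean a f n x - f x\<bar> \<le> (real r + 1) / pi * (K1 + 2 * K2) * real (n + 1) powr (\<beta> + 1 / p + 1) * A_var a n r * \<omega> (pi / real (n + 1))"
      unfolding eN A_var_def using fin by (simp add: A_def b_def)
  qed
qed


end
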